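(* Assume that $\theta_\varepsilon \ll \varepsilon|\log \varepsilon|$ and that $u_\varepsilon\colon\Omega_\varepsilon\to\mathcal{S}_\varepsilon$ satisfy $\frac{1}{\varepsilon \theta_\varepsilon}E_\varepsilon(u_\varepsilon) \leq C$. Let $G_{u_\varepsilon} \in \mathcal{D}_2(\Omega \times \mathbb{R}^2)$ be the currents associated to $u_\varepsilon$ and assume that $G_{u_\varepsilon}\rightharpoonup T$ in $\mathcal{D}_2(\Omega\times\mathbb{R}^2)$ with $T \in \mathrm{cart}(\Omega \times \mathbb{S}^1)$, represented as $T = \vec{T} |T|$. Then for every open set $A \subset\subset \Omega$ $$\int_{A \times \mathbb{R}^2}\Phi( \vec{T} )\,d |T| \leq \liminf_{\varepsilon \to 0} \int_{A \times \mathbb{R}^2}\Phi( \vec{G}_{u_\varepsilon} )\,d |G_{u_\varepsilon}| .$$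
   Context: $\Omega\subset\mathbb{R}^2$ bounded open with Lipschitz boundary, $\mathbb{R}^2\cong\mathbb{C}$. For $\varepsilon>0$ (along a sequence $\varepsilon\to0$): $N_\varepsilon\in\mathbb{N}$, $\theta_\varepsilon=2\pi/N_\varepsilon$, $\mathcal{S}_\varepsilon=\{\exp(\iota k\theta_\varepsilon):k=0,\dots,N_\varepsilon-1\}$, $\Omega_\varepsilon=\Omega\cap\varepsilon\mathbb{Z}^2$, $E_\varepsilon(u)=\frac12\sum_{\langle i,j\rangle}\varepsilon^2|u(\varepsilon i)-u(\varepsilon j)|^2$ over ordered nearest-neighbour pairs $(i,j)$ ($|i-j|=1$) with $\varepsilon i,\varepsilon j\in\Omega_\varepsilon$; $\alpha_\varepsilon\ll\beta_\varepsilon$ means $\alpha_\varepsilon/\beta_\varepsilon\to0$. Lattice maps are identified with piecewise constant interpolations on squares $\varepsilon i+[0,\varepsilon)^2$. Currents: $\mathcal{D}_k(O)$ dual of smooth compactly supported $k$-forms; weak convergence is pointwise on forms; finite-mass currents are written $T=\vec T|T|$, $|T|$ the total variation measure, $|\vec T|=1$. Points $(x,y)\in\mathbb{R}^2\times\mathbb{R}^2$ with bases $e_1,e_2$, $\bar e_1,\bar e_2$; $\hat x^1=x^2$, $\hat x^2=x^1$. For piecewise constant $u$ with values in $\mathbb{S}^1$: $G_u(\phi\,dx^1\wedge dx^2)=\int_\Omega\phi(x,u(x))dx$, $G_u(\phi\,d\hat x^l\wedge dy^m)=(-1)^{2-l}\int_{J_u}\{\int_{\gamma_x}\phi(x,y)dy^m\}\nu_u^l\,d\mathcal{H}^1$,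 $G_u(\phi\,dy^1\wedge dy^2)=0$, with $J_u$ the jump set, $\nu_u$ its normal, $\gamma_x$ the oriented geodesic arc from $u^-(x)$ to $u^+(x)$. $\mathrm{cart}(\Omega\times\mathbb{S}^1)$: integer multiplicity rectifiable $T\in\mathcal{D}_2(\Omega\times\mathbb{R}^2)$ with $\partial T=0$ in $\Omega\times\mathbb{R}^2$, $\pi_\#T=[\![\Omega]\!]$, $T(\phi\,dx^1\wedge dx^2)\ge0$ for $\phi\ge0$, finite mass, $\sup\{T(\phi|y|dx^1\wedge dx^2):|\phi|\le1\}<\infty$, $\mathrm{supp}\,T\subset\overline\Omega\times\mathbb{S}^1$. For a 2-vector $\xi=\xi^{\bar00}e_1\wedge e_2+\xi^{21}e_1\wedge\bar e_1+\xi^{22}e_1\wedge\bar e_2+\xi^{11}e_2\wedge\bar e_1+\xi^{12}e_2\wedge\bar e_2+\xi^{0\bar0}\bar e_1\wedge\bar e_2$, $\Phi(\xi)=\sqrt{(\xi^{21})^2+(\xi^{22})^2}+\sqrt{(\xi^{11})^2+(\xi^{12})^2}$. *)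

theory Defs
  imports "HOL-Analysis.Analysis"
begin

section \<open>Points of Omega x R^2, identified with complex x complex\<close>

type_synonym pt = "complex \<times> complex"

text \<open>Coordinates z = (x1,x2,y1,y2) indexed 0,1,2,3.\<close>
definition coord :: "nat \<Rightarrow> pt \<Rightarrow> real" where
  "coord a z = (if a = 0 then Re (fst z) else if a = 1 then Im (fst z)
               else if a = 2 then Re (snd z) else Im (snd z))"

definition coordvec :: "nat \<Rightarrow> pt" where
  "coordvec a = (if a = 0 then (1,0) else if a = 1 then (\<i>,0)
                 else if a = 2 then (0,1) else (0,\<i>))"

datatype cov2 = DX12 | DX1Y1 | DX1Y2 | DX2Y1 | DX2Y2 | DY12

lemma UNIV_cov2: "(UNIV :: cov2 set) = {DX12, DX1Y1, DX1Y2, DX2Y1, DX2Y2, DY12}"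
  using cov2.exhaust by auto

instance cov2 :: finite
  by standard (simp add: UNIV_cov2)

text \<open>Index pairs: DX12 = e1/\e2 (dx1/\dx2), DX1Y1 = e1/\ebar1, DX1Y2 = e1/\ebar2,
  DX2Y1 = e2/\ebar1, DX2Y2 = e2/\ebar2, DY12 = ebar1/\ebar2.\<close>
fun pair_of :: "cov2 \<Rightarrow> nat \<times> nat" where
  "pair_of DX12 = (0,1)" | "pair_of DX1Y1 = (0,2)" | "pair_of DX1Y2 = (0,3)"
| "pair_of DX2Y1 = (1,2)" | "pair_of DX2Y2 = (1,3)" | "pair_of DY12 = (2,3)"

type_synonym vec2 = "real ^ cov2"

definition wedge :: "pt \<Rightarrow> pt \<Rightarrow> vec2" where
  "wedge v w = (\<chi> c. case pair_of c of (a,b) \<Rightarrow> coord a v * coord b w - coord b v * coord a w)"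

definition Phi :: "vec2 \<Rightarrow> real" where
  "Phi \<xi> = sqrt ((\<xi>$DX1Y1)\<^sup>2 + (\<xi>$DX1Y2)\<^sup>2) + sqrt ((\<xi>$DX2Y1)\<^sup>2 + (\<xi>$DX2Y2)\<^sup>2)"

fun Ck :: "nat \<Rightarrow> ('a::real_normed_vector \<Rightarrow> 'b::real_normed_vector) \<Rightarrow> bool" where
  "Ck 0 f = continuous_on UNIV f"
| "Ck (Suc n) f = ((\<forall>x. f differentiable (at x)) \<and>
                   (\<forall>v. Ck n (\<lambda>x. frechet_derivative f (at x) v)))"

definition smooth :: "('a::real_normed_vector \<Rightarrow> 'b::real_normed_vector) \<Rightarrow> bool" where
  "smooth f \<longleftrightarrow> (\<forall>n. Ck n f)"

definition tsupp :: "('a::topological_space \<Rightarrow> 'b::zero) \<Rightarrow> 'a set" where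
  "tsupp f = closure {x. f x \<noteq> 0}"

definition test_funs :: "'a::real_normed_vector set \<Rightarrow> ('a \<Rightarrow> real) set" where
  "test_funs W = {f. smooth f \<and> compact (tsupp f) \<and> tsupp f \<subseteq> W}"

text \<open>Smooth compactly supported 2-forms on W (coefficients w.r.t. the basis dz^a/\dz^b).\<close>
definition test_forms :: "pt set \<Rightarrow> (pt \<Rightarrow> vec2) set" where
  "test_forms W = {\<omega>. smooth \<omega> \<and> compact (tsupp \<omega>) \<and> tsupp \<omega> \<subseteq> W}"

text \<open>A 2-current is represented by its action on 2-forms (only test forms matter).\<close>
type_synonym current2 = "(pt \<Rightarrow> vec2) \<Rightarrow> real"

definition form_comp :: "cov2 \<Rightarrow> (pt \<Rightarrow> real) \<Rightarrow> pt \<Rightarrow> vec2" where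
  "form_comp c \<phi> z = (\<chi> d. if d = c then \<phi> z else 0)"

definition pderiv :: "nat \<Rightarrow> (pt \<Rightarrow> real) \<Rightarrow> pt \<Rightarrow> real" where
  "pderiv a f z = frechet_derivative f (at z) (coordvec a)"

text \<open>Exterior derivative of the 1-form sum_a eta_a dz^a.\<close>
definition dform1 :: "(nat \<Rightarrow> pt \<Rightarrow> real) \<Rightarrow> pt \<Rightarrow> vec2" where
  "dform1 \<eta> z = (\<chi> c. case pair_of c of (a,b) \<Rightarrow> pderiv a (\<eta> b) z - pderiv b (\<eta> a) z)"

definition boundary_free :: "pt set \<Rightarrow> current2 \<Rightarrow> bool" where
  "boundary_free W T \<longleftrightarrow> (\<forall>\<eta>. (\<forall>a<4. \<eta> a \<in> test_funs W) \<longrightarrow> T (dform1 \<eta>) = 0)"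

definition hausdorff2_delta :: "real \<Rightarrow> pt set \<Rightarrow> ennreal" where
  "hausdorff2_delta \<delta> A = (INF C \<in> {C :: nat \<Rightarrow> pt set. A \<subseteq> (\<Union>j. C j) \<and>
        (\<forall>j. bounded (C j) \<and> diameter (C j) \<le> \<delta>)}.
        (\<Sum>j. ennreal (pi / 4 * (diameter (C j))\<^sup>2)))"

definition hausdorff2_outer :: "pt set \<Rightarrow> ennreal" where
  "hausdorff2_outer A = (SUP \<delta> \<in> {0<..}. hausdorff2_delta \<delta> A)"

definition H2 :: "pt measure" where
  "H2 = completion (measure_of UNIV (sets borel) hausdorff2_outer)"

definition C1_immersion :: "(complex \<Rightarrow> pt) \<Rightarrow> complex set \<Rightarrow> bool" where
  "C1_immersion \<phi> U \<longleftrightarrow> open U \<and> inj_on \<phi> U \<and> (\<forall>p\<in>U. \<phi> differentiable (at p)) \<and>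
     continuous_on U (\<lambda>p. frechet_derivative \<phi> (at p) 1) \<and>
     continuous_on U (\<lambda>p. frechet_derivative \<phi> (at p) \<i>) \<and>
     (\<forall>p\<in>U. wedge (frechet_derivative \<phi> (at p) 1) (frechet_derivative \<phi> (at p) \<i>) \<noteq> 0)"

text \<open>T(omega) = int_M <omega, xi> theta dH^2 with M countably 2-rectifiable
  (covered up to an H^2-null set by countably many C^1 embedded surfaces),
  theta positive integer valued and locally H^2-integrable, xi a unit 2-vector
  orienting the tangent plane H^2-a.e. on M.\<close>
definition imr_rep :: "pt set \<Rightarrow> current2 \<Rightarrow> pt set \<Rightarrow> (pt \<Rightarrow> nat) \<Rightarrow> (pt \<Rightarrow> vec2) \<Rightarrow> bool" where
  "imr_rep W T M \<theta> \<xi> \<longleftrightarrow>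
     M \<subseteq> W \<and> M \<in> sets H2 \<and>
     (\<lambda>z. real (\<theta> z)) \<in> borel_measurable H2 \<and> \<xi> \<in> borel_measurable H2 \<and>
     (\<forall>z\<in>M. \<theta> z \<ge> 1) \<and>
     (\<forall>K. compact K \<and> K \<subseteq> W \<longrightarrow> (\<integral>\<^sup>+ z. indicator (M \<inter> K) z * ennreal (real (\<theta> z)) \<partial>H2) < \<infinity>) \<and>
     (\<exists>N \<phi> U. N \<in> null_sets H2 \<and> (\<forall>j::nat. C1_immersion (\<phi> j) (U j)) \<and>
        M \<subseteq> N \<union> (\<Union>j. \<phi> j ` U j) \<and>
        (AE z in H2. z \<in> M \<longrightarrow> norm (\<xi> z) = 1 \<and>
           (\<forall>j. \<forall>p\<in>U j. \<phi> j p = z \<longrightarrow>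
              (let w = wedge (frechet_derivative (\<phi> j) (at p) 1) (frechet_derivative (\<phi> j) (at p) \<i>)
               in \<xi> z = (1 / norm w) *\<^sub>R w \<or> \<xi> z = - ((1 / norm w) *\<^sub>R w))))) \<and>
     (\<forall>\<omega>\<in>test_forms W. T \<omega> = (\<integral> z. indicator M z * real (\<theta> z) * (\<omega> z \<bullet> \<xi> z) \<partial>H2))"

definition cart :: "complex set \<Rightarrow> current2 \<Rightarrow> bool" where
  "cart \<Omega> T \<longleftrightarrow>
     (\<exists>M \<theta> \<xi>. imr_rep (\<Omega> \<times> UNIV) T M \<theta> \<xi> \<and>
        (\<exists>K. \<forall>\<phi>\<in>test_funs (\<Omega> \<times> UNIV). (\<forall>z. \<bar>\<phi> z\<bar> \<le> 1) \<longrightarrow>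
            (\<integral> z. indicator M z * real (\<theta> z) * (\<phi> z * norm (snd z) * \<xi> z $ DX12) \<partial>H2) \<le> K)) \<and>
     boundary_free (\<Omega> \<times> UNIV) T \<and>
     (\<forall>\<psi>\<in>test_funs \<Omega>. \<forall>\<zeta>\<in>test_funs (UNIV :: complex set).
        (\<exists>V. open V \<and> sphere 0 1 \<subseteq> V \<and> (\<forall>y\<in>V. \<zeta> y = 1)) \<longrightarrow>
        T (form_comp DX12 (\<lambda>z. \<psi> (fst z) * \<zeta> (snd z))) = (\<integral> x. indicator \<Omega> x * \<psi> x \<partial>lborel)) \<and>
     (\<forall>\<phi>\<in>test_funs (\<Omega> \<times> UNIV). (\<forall>z. \<phi> z \<ge> 0) \<longrightarrow> T (form_comp DX12 \<phi>) \<ge> 0) \<and>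
     (\<exists>K. \<forall>\<omega>\<in>test_forms (\<Omega> \<times> UNIV). (\<forall>z. norm (\<omega> z) \<le> 1) \<longrightarrow> T \<omega> \<le> K) \<and>
     (\<forall>\<omega>\<in>test_forms (\<Omega> \<times> UNIV). tsupp \<omega> \<inter> (closure \<Omega> \<times> sphere 0 1) = {} \<longrightarrow> T \<omega> = 0)"

text \<open>Such a pair is
  unique (mu = |T|, xi = Tvec mu-a.e.).\<close>
definition polar_rep :: "pt set \<Rightarrow> current2 \<Rightarrow> pt measure \<Rightarrow> (pt \<Rightarrow> vec2) \<Rightarrow> bool" where
  "polar_rep W T \<mu> \<xi> \<longleftrightarrow> sets \<mu> = sets borel \<and> emeasure \<mu> (- W) = 0 \<and>
     (\<forall>K. compact K \<and> K \<subseteq> W \<longrightarrow> emeasure \<mu> K < \<infinity>) \<and>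
     \<xi> \<in> borel_measurable borel \<and> (AE z in \<mu>. norm (\<xi> z) = 1) \<and>
     (\<forall>\<omega>\<in>test_forms W. T \<omega> = (\<integral> z. \<omega> z \<bullet> \<xi> z \<partial>\<mu>))"

definition lipschitz_boundary :: "complex set \<Rightarrow> bool" where
  "lipschitz_boundary \<Omega> \<longleftrightarrow> (\<forall>p\<in>frontier \<Omega>. \<exists>r>0. \<exists>c g L. norm c = 1 \<and> L-lipschitz_on UNIV g \<and>
      (\<forall>z\<in>ball p r. z \<in> \<Omega> \<longleftrightarrow> Im (c * (z - p)) < g (Re (c * (z - p)))))"

definition lat :: "real \<Rightarrow> int \<times> int \<Rightarrow> complex" where
  "lat \<epsilon> i = Complex (\<epsilon> * of_int (fst i)) (\<epsilon> * of_int (snd i))"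

definition theta :: "nat \<Rightarrow> real" where
  "theta N = 2 * pi / real N"

definition clock_set :: "nat \<Rightarrow> complex set" where
  "clock_set N = {cis (real k * theta N) | k. k < N}"

definition energy :: "complex set \<Rightarrow> real \<Rightarrow> (int \<times> int \<Rightarrow> complex) \<Rightarrow> real" where
  "energy \<Omega> \<epsilon> u = 1/2 * (\<Sum>(i,j) \<in> {(i,j). \<bar>fst i - fst j\<bar> + \<bar>snd i - snd j\<bar> = 1 \<and>
        lat \<epsilon> i \<in> \<Omega> \<and> lat \<epsilon> j \<in> \<Omega>}. \<epsilon>\<^sup>2 * (cmod (u i - u j))\<^sup>2)"

definition interp :: "real \<Rightarrow> (int \<times> int \<Rightarrow> complex) \<Rightarrow> complex \<Rightarrow> complex" where
  "interp \<epsilon> u x = u (\<lfloor>Re x / \<epsilon>\<rfloor>, \<lfloor>Im x / \<epsilon>\<rfloor>)"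

text \<open>Integral of phi(x,.) dy^m (m = 1,2) along the oriented geodesic arc from a to b,
  gamma(t) = a cis(t alpha), alpha = Arg(b/a) in (-pi,pi] (anticlockwise if antipodal).\<close>
definition arc_int :: "(pt \<Rightarrow> real) \<Rightarrow> complex \<Rightarrow> nat \<Rightarrow> complex \<Rightarrow> complex \<Rightarrow> real" where
  "arc_int \<phi> x m a b = (let \<alpha> = Arg (b / a) in
      integral {0..1} (\<lambda>t. \<phi> (x, a * cis (t * \<alpha>)) *
        (if m = 1 then Re (\<i> * \<alpha> * a * cis (t * \<alpha>)) else Im (\<i> * \<alpha> * a * cis (t * \<alpha>)))))"

text \<open>Integrand on the jump set: sum over l,m of (-1)^(2-l) (int_gamma omega_{lm} dy^m) nu^l,
  where omega_{lm} is the coefficient of d xhat^l /\ dy^m.\<close>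
definition jump_density :: "(pt \<Rightarrow> vec2) \<Rightarrow> complex \<Rightarrow> real \<times> real \<Rightarrow> complex \<Rightarrow> complex \<Rightarrow> real" where
  "jump_density \<omega> x \<nu> a b =
     snd \<nu> * (arc_int (\<lambda>z. \<omega> z $ DX1Y1) x 1 a b + arc_int (\<lambda>z. \<omega> z $ DX1Y2) x 2 a b)
   - fst \<nu> * (arc_int (\<lambda>z. \<omega> z $ DX2Y1) x 1 a b + arc_int (\<lambda>z. \<omega> z $ DX2Y2) x 2 a b)"

text \<open>The jump set consists of
  lattice edges: the right edge of the square of i (normal e1, u^- = u i,
  u^+ = u (i+e1)) and its top edge (normal e2, u^- = u i, u^+ = u (i+e2)); only
  points in Omega count, and H^1 on an edge is length measure.\<close>
definition G_cur :: "complex set \<Rightarrow> real \<Rightarrow> (int \<times> int \<Rightarrow> complex) \<Rightarrow> current2" where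
  "G_cur \<Omega> \<epsilon> u \<omega> =
     (\<integral> x. indicator \<Omega> x * \<omega> (x, interp \<epsilon> u x) $ DX12 \<partial>lborel)
   + (\<Sum>i \<in> {i. \<exists>s\<in>{0..1}. \<exists>t\<in>{0..1}. Complex (\<epsilon> * (of_int (fst i) + s)) (\<epsilon> * (of_int (snd i) + t)) \<in> \<Omega>}.
        (if u i \<noteq> u (fst i + 1, snd i) then
          (\<integral> s. indicator {\<epsilon> * of_int (snd i) ..< \<epsilon> * (of_int (snd i) + 1)} s *
             indicator \<Omega> (Complex (\<epsilon> * (of_int (fst i) + 1)) s) *
             jump_density \<omega> (Complex (\<epsilon> * (of_int (fst i) + 1)) s) (1, 0) (u i) (u (fst i + 1, snd i)) \<partial>lborel)
         else 0)
      + (if u i \<noteq> u (fst i, snd i + 1) then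
          (\<integral> s. indicator {\<epsilon> * of_int (fst i) ..< \<epsilon> * (of_int (fst i) + 1)} s *
             indicator \<Omega> (Complex s (\<epsilon> * (of_int (snd i) + 1))) *
             jump_density \<omega> (Complex s (\<epsilon> * (of_int (snd i) + 1))) (0, 1) (u i) (u (fst i, snd i + 1)) \<partial>lborel)
         else 0))"

end

theory Submission
  imports Defs
begin


lemma fd_works: "f differentiable (at x) \<Longrightarrow> (f has_derivative frechet_derivative f (at x)) (at x)"
  using frechet_derivative_works by blast

lemma Ck_mono: "Ck (Suc n) f \<Longrightarrow> Ck n f"
proof (induction n arbitrary: f)
  case 0
  then show ?case
    by (auto intro!: continuous_at_imp_continuous_on differentiable_imp_continuous_within)
next
  case (Suc n)
  then show ?case by simp
qed

lemma Ck_const: "Ck n (\<lambda>x. c)"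
proof (induction n arbitrary: c)
  case 0 then show ?case by simp
next
  case (Suc n) then show ?case by simp
qed

lemma Ck_add:
  assumes "Ck n f" "Ck n g" shows "Ck n (\<lambda>x. f x + g x)"
  using assms
proof (induction n arbitrary: f g)
  case 0 then show ?case by (auto intro: continuous_on_add)
next
  case (Suc n)
  have d: "frechet_derivative (\<lambda>x. f x + g x) (at x) v = frechet_derivative f (at x) v + frechet_derivative g (at x) v" for x v
  proof -
    have "((\<lambda>x. f x + g x) has_derivative (\<lambda>v. frechet_derivative f (at x) v + frechet_derivative g (at x) v)) (at x)"
      using Suc.prems by (intro has_derivative_add fd_works) auto
    then show ?thesis using frechet_derivative_at by metis
  qed
  show ?case using Suc.prems by (auto simp: d intro!: Suc.IH)
qed

lemma Ck_blin:
  assumes "bounded_linear L" "Ck n f" shows "Ck n (\<lambda>x. L (f x))"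
  using assms(2)
proof (induction n arbitrary: f)
  case 0 then show ?case
    using assms(1) by (auto intro: continuous_on_compose2[OF linear_continuous_on] )
next
  case (Suc n)
  have d: "frechet_derivative (\<lambda>x. L (f x)) (at x) v = L (frechet_derivative f (at x) v)" for x v
  proof -
    have "((\<lambda>x. L (f x)) has_derivative (\<lambda>v. L (frechet_derivative f (at x) v))) (at x)"
      using Suc.prems by (intro bounded_linear.has_derivative[OF assms(1)] fd_works) auto
    then show ?thesis using frechet_derivative_at by metis
  qed
  have "(\<lambda>x. L (f x)) differentiable at x" for x
  proof -
    have "((\<lambda>x. L (f x)) has_derivative (\<lambda>v. L (frechet_derivative f (at x) v))) (at x)"
      using Suc.prems by (intro bounded_linear.has_derivative[OF assms(1)] fd_works) auto
    then show ?thesis by (rule differentiableI)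
  qed
  then show ?case using Suc.prems by (auto simp: d intro!: Suc.IH)
qed

lemma Ck_linear:
  assumes "bounded_linear L" shows "Ck n L"
proof (cases n)
  case 0 then show ?thesis using assms by (simp add: linear_continuous_on)
next
  case (Suc m)
  have d: "frechet_derivative L (at x) = L" for x
    using frechet_derivative_at[OF bounded_linear.has_derivative[OF assms has_derivative_ident]] by simp
  have "L differentiable at x" for x
    using bounded_linear.has_derivative[OF assms has_derivative_ident] by (auto intro: differentiableI)
  then show ?thesis using Suc by (simp add: d Ck_const)
qed



lemma Ck_mult:
  fixes f g :: "'a::real_normed_vector \<Rightarrow> real"
  assumes "Ck n f" "Ck n g" shows "Ck n (\<lambda>x. f x * g x)"
  using assms
proof (induction n arbitrary: f g)
  case 0 then show ?case by (auto intro: continuous_on_mult)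
next
  case (Suc n)
  have h: "((\<lambda>x. f x * g x) has_derivative (\<lambda>v. f x * frechet_derivative g (at x) v + frechet_derivative f (at x) v * g x)) (at x)" for x
    using Suc.prems by (intro has_derivative_mult fd_works) auto
  have d: "frechet_derivative (\<lambda>x. f x * g x) (at x) v = f x * frechet_derivative g (at x) v + frechet_derivative f (at x) v * g x" for x v
    using frechet_derivative_at[OF h] by metis
  have fm: "Ck n f" "Ck n g" using Suc.prems Ck_mono by blast+
  have "\<forall>x. (\<lambda>x. f x * g x) differentiable at x" using h differentiableI by metis
  moreover have "Ck n (\<lambda>x. f x * frechet_derivative g (at x) v + frechet_derivative f (at x) v * g x)" for v
  proof (rule Ck_add)
    show "Ck n (\<lambda>x. f x * frechet_derivative g (at x) v)"
      by (rule Suc.IH) (use Suc.prems fm in auto)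
    show "Ck n (\<lambda>x. frechet_derivative f (at x) v * g x)"
      by (rule Suc.IH) (use Suc.prems fm in auto)
  qed
  ultimately show ?case by (simp add: d)
qed



lemma Ck_comp:
  fixes h :: "real \<Rightarrow> real" and g :: "'a::real_normed_vector \<Rightarrow> real"
  assumes "Ck n h" "Ck n g" shows "Ck n (\<lambda>x. h (g x))"
  using assms
proof (induction n arbitrary: h g)
  case 0 then show ?case by (auto intro: continuous_on_compose2)
next
  case (Suc n)
  have lin: "frechet_derivative h (at t) w = w * frechet_derivative h (at t) 1" for t w
  proof -
    have "(h has_derivative frechet_derivative h (at t)) (at t)"
      by (rule fd_works) (use Suc.prems in auto)
    then have "bounded_linear (frechet_derivative h (at t))"
      by (rule has_derivative_bounded_linear)
    then have "frechet_derivative h (at t) (w *\<^sub>R 1) = w *\<^sub>R frechet_derivative h (at t) 1"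
      using linear_scale bounded_linear.linear by blast
    then show ?thesis by simp
  qed
  have hd: "((\<lambda>x. h (g x)) has_derivative (\<lambda>v. frechet_derivative h (at (g x)) (frechet_derivative g (at x) v))) (at x)" for x
  proof -
    have g1: "(g has_derivative frechet_derivative g (at x)) (at x)" by (rule fd_works) (use Suc.prems in auto)
    have h1: "(h has_derivative frechet_derivative h (at (g x))) (at (g x))" by (rule fd_works) (use Suc.prems in auto)
    show ?thesis using diff_chain_at[OF g1 h1] by (simp add: o_def)
  qed
  have d: "frechet_derivative (\<lambda>x. h (g x)) (at x) v = frechet_derivative h (at (g x)) 1 * frechet_derivative g (at x) v" for x v
  proof -
    have "frechet_derivative (\<lambda>x. h (g x)) (at x) = (\<lambda>v. frechet_derivative h (at (g x)) (frechet_derivative g (at x) v))"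
      by (rule frechet_derivative_at[OF hd, symmetric])
    then show ?thesis using lin[of "g x" "frechet_derivative g (at x) v"] by (simp add: mult.commute)
  qed
  have gm: "Ck n g" using Suc.prems Ck_mono by blast
  have "\<forall>x. (\<lambda>x. h (g x)) differentiable at x" using hd by (auto intro: differentiableI)
  moreover have "Ck n (\<lambda>x. frechet_derivative h (at (g x)) 1 * frechet_derivative g (at x) v)" for v
  proof (rule Ck_mult)
    show "Ck n (\<lambda>x. frechet_derivative h (at (g x)) 1)"
    proof -
      have "Ck n (\<lambda>t. frechet_derivative h (at t) 1)" using Suc.prems by auto
      from Suc.IH[OF this gm] show ?thesis .
    qed
    show "Ck n (\<lambda>x. frechet_derivative g (at x) v)" using Suc.prems by auto
  qed
  ultimately show ?case by (simp add: d)
qed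


lemma Ck_cmult: "Ck n f \<Longrightarrow> Ck n (\<lambda>x. c * (f x :: real))"
  by (rule Ck_blin[OF bounded_linear_mult_right])

definition Fk :: "nat \<Rightarrow> real \<Rightarrow> real" where
  "Fk k t = (if t > 0 then inverse t ^ k * exp (- inverse t) else 0)"

lemma Fk_lim: "(Fk k \<longlongrightarrow> 0) (at_right 0)"
proof -
  have "((\<lambda>t. (\<lambda>s. s ^ k / exp s) (inverse t)) \<longlongrightarrow> (0::real)) (at_right 0)"
    by (rule filterlim_compose[OF tendsto_power_div_exp_0 filterlim_inverse_at_top_right])
  moreover have ev: "eventually (\<lambda>t. (\<lambda>s. s ^ k / exp s) (inverse t) = Fk k t) (at_right 0)"
    by (rule eventually_mono[OF eventually_at_right_less[of 0]]) (auto simp: Fk_def exp_minus divide_inverse)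
  ultimately show ?thesis using tendsto_cong[OF ev] by simp
qed

lemma Fk_deriv: "(Fk k has_real_derivative (Fk (k+2) t - real k * Fk (k+1) t)) (at t)"
proof (cases "t > 0")
  case True
  have "((\<lambda>s. inverse s ^ k * exp (- inverse s)) has_real_derivative
      (Fk (k+2) t - real k * Fk (k+1) t)) (at t)"
  proof -
    have "((\<lambda>s. inverse s ^ k * exp (- inverse s)) has_real_derivative
      (real k * inverse t ^ (k - 1) * (- inverse (t*t)) * exp (- inverse t) + inverse t ^ k * (exp (- inverse t) * inverse (t*t)))) (at t)"
      using True by (auto intro!: derivative_eq_intros simp: power2_eq_square)
    moreover have "real k * inverse t ^ (k - 1) * (- inverse (t*t)) * exp (- inverse t) + inverse t ^ k * (exp (- inverse t) * inverse (t*t))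
        = Fk (k+2) t - real k * Fk (k+1) t"
    proof (cases k)
      case 0 then show ?thesis using True by (simp add: Fk_def inverse_mult_distrib)
    next
      case (Suc m) then show ?thesis using True by (simp add: Fk_def inverse_mult_distrib algebra_simps)
    qed
    ultimately show ?thesis by simp
  qed
  then show ?thesis
    by (rule has_field_derivative_transform_within_open[where S="{0<..}"]) (use True in \<open>auto simp: Fk_def\<close>)
next
  case False
  show ?thesis
  proof (cases "t < 0")
    case True
    have "((\<lambda>s. 0) has_real_derivative (Fk (k+2) t - real k * Fk (k+1) t)) (at t)"
      using True by (simp add: Fk_def)
    then show ?thesis
      by (rule has_field_derivative_transform_within_open[where S="{..<0}"]) (use True in \<open>auto simp: Fk_def\<close>)
  next
    case False
    with \<open>\<not> t > 0\<close> have t0: "t = 0" by simp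
    have "((\<lambda>y. (Fk k y - Fk k 0) / (y - 0)) \<longlongrightarrow> 0) (at 0)"
    proof (subst filterlim_at_split, rule conjI)
      show "((\<lambda>y. (Fk k y - Fk k 0) / (y - 0)) \<longlongrightarrow> 0) (at_left 0)"
        by (rule tendsto_eventually) (unfold eventually_at_filter, rule always_eventually, auto simp: Fk_def)
      have ev: "eventually (\<lambda>y. Fk (Suc k) y = (Fk k y - Fk k 0) / (y - 0)) (at_right 0)"
        by (rule eventually_mono[OF eventually_at_right_less[of 0]]) (auto simp: Fk_def divide_inverse mult_ac)
      then show "((\<lambda>y. (Fk k y - Fk k 0) / (y - 0)) \<longlongrightarrow> 0) (at_right 0)"
        using Fk_lim[of "Suc k"] tendsto_cong[OF ev] by simp
    qed
    then show ?thesis using t0 by (simp add: has_field_derivative_iff Fk_def)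
  qed
qed

lemma Fk_Ck: "Ck n (Fk k)"
proof (induction n arbitrary: k)
  case 0
  then show ?case using Fk_deriv by (auto intro!: continuous_at_imp_continuous_on DERIV_isCont)
next
  case (Suc n)
  have hd: "(Fk k has_derivative (\<lambda>v. (Fk (k+2) x - real k * Fk (k+1) x) * v)) (at x)" for x
    using Fk_deriv[of k x] by (simp add: has_field_derivative_def)
  have d: "frechet_derivative (Fk k) (at x) v = v * (Fk (k+2) x - real k * Fk (k+1) x)" for x v
    using frechet_derivative_at[OF hd, symmetric] by (simp add: mult.commute)
  have "Ck n (\<lambda>x. v * (Fk (k+2) x - real k * Fk (k+1) x))" for v
  proof -
    have "Ck n (\<lambda>x. (- real k) * Fk (k+1) x)" by (rule Ck_cmult[OF Suc.IH])
    then have "Ck n (\<lambda>x. Fk (k+2) x + (- real k) * Fk (k+1) x)" by (rule Ck_add[OF Suc.IH])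
    then have "Ck n (\<lambda>x. v * (Fk (k+2) x + (- real k) * Fk (k+1) x))" by (rule Ck_cmult)
    then show ?thesis by simp
  qed
  moreover have "\<forall>x. Fk k differentiable at x" using hd by (auto intro: differentiableI)
  ultimately show ?case by (simp add: d)
qed

lemma exp_Ck: "Ck n (\<lambda>t::real. c * exp (a * t))"
proof (induction n arbitrary: c)
  case 0 then show ?case by (auto intro!: continuous_intros)
next
  case (Suc n)
  have hd: "((\<lambda>t::real. c * exp (a * t)) has_derivative (\<lambda>v. (c * a * exp (a * x)) * v)) (at x)" for x
  proof -
    have "((\<lambda>t::real. c * exp (a * t)) has_real_derivative (c * a * exp (a * x))) (at x)"
      by (auto intro!: derivative_eq_intros)
    then show ?thesis by (simp add: has_field_derivative_def)
  qed
  have d: "frechet_derivative (\<lambda>t::real. c * exp (a * t)) (at x) v = (v * c * a) * exp (a * x)" for x v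
    using frechet_derivative_at[OF hd, symmetric] by (simp add: mult_ac)
  have "\<forall>x. (\<lambda>t::real. c * exp (a * t)) differentiable at x" using differentiableI[OF hd] by blast
  then show ?case by (simp add: d Suc.IH)
qed


lemma Ck_sum:
  assumes "finite S" "\<And>i. i \<in> S \<Longrightarrow> Ck n (f i)" shows "Ck n (\<lambda>x. \<Sum>i\<in>S. f i x)"
  using assms by (induction S rule: finite_induct) (auto intro: Ck_add Ck_const)

lemma Ck_sqdist: "Ck n (\<lambda>z::'a::real_inner. (z - c) \<bullet> (z - c))"
proof (cases n)
  case 0 then show ?thesis by (auto intro!: continuous_intros)
next
  case (Suc m)
  have hd: "((\<lambda>z::'a. (z - c) \<bullet> (z - c)) has_derivative (\<lambda>v. 2 * (z \<bullet> v) + (- 2 * (c \<bullet> v)))) (at z)" for z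
  proof -
    have "((\<lambda>z::'a. (z - c) \<bullet> (z - c)) has_derivative (\<lambda>v. (z - c) \<bullet> v + v \<bullet> (z - c))) (at z)"
      by (auto intro!: derivative_eq_intros)
    moreover have "(\<lambda>v. (z - c) \<bullet> v + v \<bullet> (z - c)) = (\<lambda>v. 2 * (z \<bullet> v) + (- 2 * (c \<bullet> v)))"
      by (auto simp: inner_diff_left inner_diff_right inner_commute)
    ultimately show ?thesis by simp
  qed
  have d: "frechet_derivative (\<lambda>z::'a. (z - c) \<bullet> (z - c)) (at z) v = 2 * (z \<bullet> v) + (- 2 * (c \<bullet> v))" for z v
    using frechet_derivative_at[OF hd, symmetric] by simp
  have "Ck m (\<lambda>z. 2 * (z \<bullet> v) + (- 2 * (c \<bullet> v)))" for v
  proof (rule Ck_add)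
    show "Ck m (\<lambda>z. 2 * (z \<bullet> v))"
      by (rule Ck_cmult, rule Ck_linear, rule bounded_linear_inner_left)
  qed (rule Ck_const)
  moreover have "\<forall>z. (\<lambda>z::'a. (z - c) \<bullet> (z - c)) differentiable at z" using differentiableI[OF hd] by blast
  ultimately show ?thesis using Suc by (simp add: d)
qed

definition bump :: "'a::real_inner \<Rightarrow> real \<Rightarrow> 'a \<Rightarrow> real" where
  "bump c r z = Fk 0 (r\<^sup>2 - (z - c) \<bullet> (z - c))"

lemma bump_Ck: "Ck n (bump c r)"
proof -
  have a: "Ck n (\<lambda>z. (-1) * ((z - c) \<bullet> (z - c)))" by (rule Ck_cmult[OF Ck_sqdist])
  have "Ck n (\<lambda>z. r\<^sup>2 + (-1) * ((z - c) \<bullet> (z - c)))" by (rule Ck_add[OF Ck_const a])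
  then have "Ck n (\<lambda>z. Fk 0 (r\<^sup>2 + (-1) * ((z - c) \<bullet> (z - c))))"
    by (rule Ck_comp[OF Fk_Ck])
  then show ?thesis by (simp add: bump_def[abs_def])
qed

lemma bump_nonneg: "bump c r z \<ge> 0"
  by (simp add: bump_def Fk_def)

lemma bump_pos_iff: assumes "r > 0" shows "bump c r z > 0 \<longleftrightarrow> dist z c < r"
proof -
  have "(z - c) \<bullet> (z - c) = (dist z c)\<^sup>2" by (simp add: dist_norm power2_norm_eq_inner)
  moreover have "(dist z c)\<^sup>2 < r\<^sup>2 \<longleftrightarrow> dist z c < r"
  proof
    assume "(dist z c)\<^sup>2 < r\<^sup>2" then show "dist z c < r"
      by (rule power_less_imp_less_base) (use assms in simp)
  next
    assume "dist z c < r" then show "(dist z c)\<^sup>2 < r\<^sup>2"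
      by (rule power_strict_mono) auto
  qed
  ultimately have "bump c r z > 0 \<longleftrightarrow> r\<^sup>2 - (dist z c)\<^sup>2 > 0" by (simp add: bump_def Fk_def)
  with \<open>(dist z c)\<^sup>2 < r\<^sup>2 \<longleftrightarrow> dist z c < r\<close> show ?thesis by simp
qed

lemma bump_cont: "continuous_on UNIV (bump c r)"
  using bump_Ck[of 0] by simp

lemma tsupp_subset_closed:
  assumes "closed S" "\<And>z. f z \<noteq> 0 \<Longrightarrow> z \<in> S" shows "tsupp f \<subseteq> S"
  unfolding tsupp_def by (rule closure_minimal) (use assms in auto)

lemma smooth_urysohn:
  fixes C :: "'a::{real_inner,heine_borel} set" and r \<delta> :: real
  assumes "compact C" "r > 0" "\<delta> > 0"
  obtains \<psi> :: "'a \<Rightarrow> real" where "\<forall>n. Ck n \<psi>" "\<And>z. 0 \<le> \<psi> z" "\<And>z. \<psi> z \<le> 1" "\<And>z. z \<in> C \<Longrightarrow> \<psi> z \<ge> 1 - \<delta>"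
    "compact (tsupp \<psi>)" "tsupp \<psi> \<subseteq> (\<Union>c\<in>C. cball c r)"
proof (cases "C = {}")
  case True
  show ?thesis by (rule that[of "\<lambda>z. 0"]) (auto simp: True Ck_const tsupp_def)
next
  case False
  obtain D where D: "D \<subseteq> C" "finite D" "C \<subseteq> (\<Union>c\<in>D. ball c r)"
  proof -
    have "C \<subseteq> (\<Union>c\<in>C. ball c r)" using assms(2) by force
    from compactE_image[OF assms(1) _ this] that show ?thesis by blast
  qed
  define \<phi> where "\<phi> z = (\<Sum>c\<in>D. bump c r z)" for z
  have \<phi>Ck: "Ck n \<phi>" for n unfolding \<phi>_def[abs_def] by (rule Ck_sum) (auto simp: D(2) bump_Ck)
  have \<phi>nn: "\<phi> z \<ge> 0" for z unfolding \<phi>_def by (intro sum_nonneg bump_nonneg)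
  have \<phi>pos: "\<phi> z > 0" if zC: "z \<in> C" for z
  proof -
    from D(3) zC have "z \<in> (\<Union>c\<in>D. ball c r)" by blast
    then obtain c where c0: "c \<in> D" "z \<in> ball c r" by blast
    then have c: "c \<in> D" "dist z c < r" by (auto simp: dist_commute)
    have "bump c r z > 0" using c bump_pos_iff assms(2) by blast
    moreover have "bump c r z \<le> \<phi> z" unfolding \<phi>_def
      by (rule member_le_sum) (use c D bump_nonneg in auto)
    ultimately show ?thesis by simp
  qed
  have \<phi>cont: "continuous_on C \<phi>" using \<phi>Ck[of 0] continuous_on_subset by auto
  obtain z0 where z0: "z0 \<in> C" "\<And>y. y \<in> C \<Longrightarrow> \<phi> z0 \<le> \<phi> y"
    using continuous_attains_inf[OF assms(1) False \<phi>cont] by blast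
  define m where "m = \<phi> z0"
  have m: "m > 0" using \<phi>pos z0 m_def by auto
  define M where "M = (\<bar>ln \<delta>\<bar> + 1) / m"
  have M: "M > 0" using m by (simp add: M_def)
  define \<psi> where "\<psi> z = 1 + (-1) * exp ((- M) * \<phi> z)" for z
  show ?thesis
  proof (rule that[of \<psi>])
    show "\<forall>n. Ck n \<psi>"
    proof
      fix n
      have "Ck n (\<lambda>t. 1 + (-1) * exp ((- M) * t))" by (rule Ck_add[OF Ck_const exp_Ck])
      from Ck_comp[OF this \<phi>Ck] show "Ck n \<psi>" unfolding \<psi>_def[abs_def] .
    qed
    show "0 \<le> \<psi> z" for z
    proof -
      have "0 \<le> M * \<phi> z" using M \<phi>nn[of z] by simp
      then have "exp ((- M) * \<phi> z) \<le> 1" by simp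
      then show ?thesis by (simp add: \<psi>_def)
    qed
    show "\<psi> z \<le> 1" for z
    proof -
      have "exp ((- M) * \<phi> z) > 0" by (rule exp_gt_zero)
      then show ?thesis unfolding \<psi>_def by linarith
    qed
    show "\<psi> z \<ge> 1 - \<delta>" if zC: "z \<in> C" for z
    proof -
      have "\<phi> z0 \<le> \<phi> z" using z0(2) zC by blast
      then have "M * \<phi> z \<ge> M * m" unfolding m_def using M by (intro mult_left_mono) auto
      also have "M * m = \<bar>ln \<delta>\<bar> + 1" using m by (simp add: M_def)
      finally have "- (M * \<phi> z) \<le> ln \<delta>" by linarith
      then have "exp (- (M * \<phi> z)) \<le> exp (ln \<delta>)" by simp
      then have "exp ((- M) * \<phi> z) \<le> \<delta>" using assms(3) by simp
      then show ?thesis unfolding \<psi>_def by linarith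
    qed
    have sub: "tsupp \<psi> \<subseteq> (\<Union>c\<in>D. cball c r)"
    proof (rule tsupp_subset_closed)
      show "closed (\<Union>c\<in>D. cball c r)" using D(2) by (intro closed_UN) auto
      fix z assume "\<psi> z \<noteq> 0"
      then have "\<phi> z \<noteq> 0" by (simp add: \<psi>_def)
      then obtain c where "c \<in> D" "bump c r z \<noteq> 0" unfolding \<phi>_def by (rule sum.not_neutral_contains_not_neutral)
      then have "bump c r z > 0" using bump_nonneg[of c r z] by linarith
      then have "dist z c < r" using bump_pos_iff[OF assms(2)] by blast
      then have "z \<in> cball c r" by (simp add: dist_commute)
      then show "z \<in> (\<Union>c\<in>D. cball c r)" using \<open>c \<in> D\<close> by blast
    qed
    show "compact (tsupp \<psi>)"
    proof -
      have "compact ((\<Union>c\<in>D. cball c r) \<inter> tsupp \<psi>)"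
      proof (rule compact_Int_closed)
        show "compact (\<Union>c\<in>D. cball c r)" using D(2) by (intro compact_UN) auto
        show "closed (tsupp \<psi>)" unfolding tsupp_def by (rule closed_closure)
      qed
      then show ?thesis using sub by (simp add: Int_absorb1)
    qed
    show "tsupp \<psi> \<subseteq> (\<Union>c\<in>C. cball c r)" using sub D(1) by blast
  qed
qed


definition adm :: "vec2 \<Rightarrow> bool" where
  "adm w \<longleftrightarrow> w$DX12 = 0 \<and> w$DY12 = 0 \<and> (w$DX1Y1)\<^sup>2 + (w$DX1Y2)\<^sup>2 \<le> 1 \<and> (w$DX2Y1)\<^sup>2 + (w$DX2Y2)\<^sup>2 \<le> 1"

lemma inner_vec2: "(x::vec2) \<bullet> y = x$DX12 * y$DX12 + x$DX1Y1 * y$DX1Y1 + x$DX1Y2 * y$DX1Y2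
   + x$DX2Y1 * y$DX2Y1 + x$DX2Y2 * y$DX2Y2 + x$DY12 * y$DY12"
  by (simp add: inner_vec_def UNIV_cov2 algebra_simps)

lemma cs2: "a * x + b * y \<le> sqrt (a\<^sup>2 + b\<^sup>2) * sqrt (x\<^sup>2 + y\<^sup>2)"
proof -
  have e: "(a\<^sup>2 + b\<^sup>2) * (x\<^sup>2 + y\<^sup>2) - (a * x + b * y)\<^sup>2 = (a * y - b * x)\<^sup>2"
    by (simp add: power2_eq_square algebra_simps)
  have "(a * x + b * y)\<^sup>2 \<le> (a\<^sup>2 + b\<^sup>2) * (x\<^sup>2 + y\<^sup>2)"
    using e zero_le_power2[of "a * y - b * x"] by linarith
  then have "sqrt ((a * x + b * y)\<^sup>2) \<le> sqrt ((a\<^sup>2 + b\<^sup>2) * (x\<^sup>2 + y\<^sup>2))" by (rule real_sqrt_le_mono)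
  then have "\<bar>a * x + b * y\<bar> \<le> sqrt (a\<^sup>2 + b\<^sup>2) * sqrt (x\<^sup>2 + y\<^sup>2)" by (simp add: real_sqrt_mult)
  then show ?thesis using abs_ge_self[of "a * x + b * y"] by linarith
qed

lemma adm_le: assumes "adm w" shows "w \<bullet> x \<le> Phi x"
proof -
  have a: "w$DX1Y1 * x$DX1Y1 + w$DX1Y2 * x$DX1Y2 \<le> sqrt ((x$DX1Y1)\<^sup>2 + (x$DX1Y2)\<^sup>2)"
  proof -
    have "w$DX1Y1 * x$DX1Y1 + w$DX1Y2 * x$DX1Y2 \<le> sqrt ((w$DX1Y1)\<^sup>2 + (w$DX1Y2)\<^sup>2) * sqrt ((x$DX1Y1)\<^sup>2 + (x$DX1Y2)\<^sup>2)"
      by (rule cs2)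
    also have "\<dots> \<le> 1 * sqrt ((x$DX1Y1)\<^sup>2 + (x$DX1Y2)\<^sup>2)"
      using assms by (intro mult_right_mono) (auto simp: adm_def)
    finally show ?thesis by simp
  qed
  have b: "w$DX2Y1 * x$DX2Y1 + w$DX2Y2 * x$DX2Y2 \<le> sqrt ((x$DX2Y1)\<^sup>2 + (x$DX2Y2)\<^sup>2)"
  proof -
    have "w$DX2Y1 * x$DX2Y1 + w$DX2Y2 * x$DX2Y2 \<le> sqrt ((w$DX2Y1)\<^sup>2 + (w$DX2Y2)\<^sup>2) * sqrt ((x$DX2Y1)\<^sup>2 + (x$DX2Y2)\<^sup>2)"
      by (rule cs2)
    also have "\<dots> \<le> 1 * sqrt ((x$DX2Y1)\<^sup>2 + (x$DX2Y2)\<^sup>2)"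
      using assms by (intro mult_right_mono) (auto simp: adm_def)
    finally show ?thesis by simp
  qed
  show ?thesis using a b assms by (simp add: inner_vec2 Phi_def adm_def)
qed

lemma adm_scale: "adm w \<Longrightarrow> 0 \<le> t \<Longrightarrow> t \<le> 1 \<Longrightarrow> adm (t *\<^sub>R w)"
proof -
  assume a: "adm w" "0 \<le> t" "t \<le> 1"
  have t2: "t\<^sup>2 \<le> 1" using a by (simp add: power_le_one)
  have "t\<^sup>2 * ((w$DX1Y1)\<^sup>2 + (w$DX1Y2)\<^sup>2) \<le> 1 * 1"
    using a t2 by (intro mult_mono) (auto simp: adm_def)
  moreover have "t\<^sup>2 * ((w$DX2Y1)\<^sup>2 + (w$DX2Y2)\<^sup>2) \<le> 1 * 1"
    using a t2 by (intro mult_mono) (auto simp: adm_def)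
  ultimately show ?thesis using a by (simp add: adm_def power_mult_distrib algebra_simps)
qed

lemma adm_0: "adm 0" by (simp add: adm_def)

lemma adm_norm: assumes "adm w" shows "norm w \<le> 2"
proof -
  have "w \<bullet> w \<le> 2" using assms by (simp add: inner_vec2 adm_def power2_eq_square)
  then have "norm w \<le> sqrt 2" by (simp add: norm_eq_sqrt_inner)
  also have "sqrt 2 \<le> (2::real)"
  proof -
    have "sqrt 2 \<le> sqrt ((2::real)^2)" by (rule real_sqrt_le_mono) simp
    then show ?thesis by simp
  qed
  finally show ?thesis .
qed

lemma adm_inner_bound: "adm w \<Longrightarrow> norm x \<le> 1 \<Longrightarrow> \<bar>w \<bullet> x\<bar> \<le> 2"
proof -
  assume "adm w" "norm x \<le> 1"
  have "\<bar>w \<bullet> x\<bar> \<le> norm w * norm x" by (rule Cauchy_Schwarz_ineq2)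
  also have "\<dots> \<le> 2 * 1" using \<open>adm w\<close> \<open>norm x \<le> 1\<close> adm_norm by (intro mult_mono) auto
  finally show ?thesis by simp
qed

definition n1 :: "vec2 \<Rightarrow> real" where "n1 w = sqrt ((w$DX1Y1)\<^sup>2 + (w$DX1Y2)\<^sup>2)"
definition n2 :: "vec2 \<Rightarrow> real" where "n2 w = sqrt ((w$DX2Y1)\<^sup>2 + (w$DX2Y2)\<^sup>2)"

definition Ret :: "vec2 \<Rightarrow> vec2" where
  "Ret w = (\<chi> c. if c = DX1Y1 \<or> c = DX1Y2 then w$c / max 1 (n1 w)
               else if c = DX2Y1 \<or> c = DX2Y2 then w$c / max 1 (n2 w) else 0)"

definition eta :: "vec2 \<Rightarrow> vec2" where
  "eta w = (\<chi> c. if c = DX1Y1 \<or> c = DX1Y2 then w$c / n1 w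
               else if c = DX2Y1 \<or> c = DX2Y2 then w$c / n2 w else 0)"

lemma div_sq_le1: assumes "M \<ge> sqrt (a\<^sup>2 + b\<^sup>2)" "M > 0" shows "(a / M)\<^sup>2 + (b / M)\<^sup>2 \<le> (1::real)"
proof -
  have "a\<^sup>2 + b\<^sup>2 \<le> M\<^sup>2"
  proof -
    have "sqrt (a\<^sup>2 + b\<^sup>2) ^ 2 \<le> M ^ 2" using assms by (intro power_mono) auto
    then show ?thesis by simp
  qed
  then show ?thesis using assms by (simp add: power_divide add_divide_distrib[symmetric] divide_le_eq_1)
qed

lemma adm_Ret: "adm (Ret w)"
proof -
  have "((w$DX1Y1) / max 1 (n1 w))\<^sup>2 + ((w$DX1Y2) / max 1 (n1 w))\<^sup>2 \<le> 1"
    by (rule div_sq_le1) (auto simp: n1_def)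
  moreover have "((w$DX2Y1) / max 1 (n2 w))\<^sup>2 + ((w$DX2Y2) / max 1 (n2 w))\<^sup>2 \<le> 1"
    by (rule div_sq_le1) (auto simp: n2_def)
  ultimately show ?thesis by (simp add: adm_def Ret_def)
qed

lemma Ret_adm: assumes "adm w" shows "Ret w = w"
proof -
  have "n1 w \<le> 1" "n2 w \<le> 1" using assms by (auto simp: adm_def n1_def n2_def)
  then have "max 1 (n1 w) = 1" "max 1 (n2 w) = 1" by auto
  then show ?thesis using assms unfolding Ret_def adm_def
    by (intro vec_eq_iff[THEN iffD2] allI, case_tac i) auto
qed

lemma Ret_cont: "continuous_on UNIV Ret"
  unfolding Ret_def n1_def n2_def
proof (intro continuous_on_vec_lambda)
  fix c :: cov2
  show "continuous_on UNIV (\<lambda>x::vec2. if c = DX1Y1 \<or> c = DX1Y2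
               then x $ c / max 1 (sqrt ((x $ DX1Y1)\<^sup>2 + (x $ DX1Y2)\<^sup>2))
               else if c = DX2Y1 \<or> c = DX2Y2
                    then x $ c / max 1 (sqrt ((x $ DX2Y1)\<^sup>2 + (x $ DX2Y2)\<^sup>2))
                    else 0)"
    by (cases c) (auto intro!: continuous_intros)
qed

lemma adm_eta: "adm (eta w)"
proof -
  have "((w$DX1Y1) / n1 w)\<^sup>2 + ((w$DX1Y2) / n1 w)\<^sup>2 \<le> 1"
  proof (cases "n1 w = 0")
    case True then show ?thesis by simp
  next
    case False
    have "n1 w \<ge> 0" by (simp add: n1_def)
    with False have "n1 w > 0" by simp
    then show ?thesis by (intro div_sq_le1) (auto simp: n1_def)
  qed
  moreover have "((w$DX2Y1) / n2 w)\<^sup>2 + ((w$DX2Y2) / n2 w)\<^sup>2 \<le> 1"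
  proof (cases "n2 w = 0")
    case True then show ?thesis by simp
  next
    case False
    have "n2 w \<ge> 0" by (simp add: n2_def)
    with False have "n2 w > 0" by simp
    then show ?thesis by (intro div_sq_le1) (auto simp: n2_def)
  qed
  ultimately show ?thesis by (simp add: adm_def eta_def)
qed

lemma sq_div: "(a::real) * (a / s) + b * (b / s) = s" if "s = sqrt (a\<^sup>2 + b\<^sup>2)"
proof (cases "s = 0")
  case True then show ?thesis by simp
next
  case False
  have "a * (a / s) + b * (b / s) = (a\<^sup>2 + b\<^sup>2) / s" by (simp add: power2_eq_square add_divide_distrib)
  also have "a\<^sup>2 + b\<^sup>2 = s\<^sup>2" using that by simp
  finally show ?thesis using False by (simp add: power2_eq_square)
qed

lemma eta_inner: "eta w \<bullet> w = Phi w"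
proof -
  have "eta w \<bullet> w = w$DX1Y1 * (w$DX1Y1 / n1 w) + w$DX1Y2 * (w$DX1Y2 / n1 w)
      + (w$DX2Y1 * (w$DX2Y1 / n2 w) + w$DX2Y2 * (w$DX2Y2 / n2 w))"
    by (simp add: inner_vec2 eta_def algebra_simps)
  also have "\<dots> = n1 w + n2 w" by (simp only: sq_div[OF n1_def] sq_div[OF n2_def])
  finally show ?thesis by (simp add: Phi_def n1_def n2_def)
qed

lemma eta_meas: "eta \<in> borel_measurable borel"
proof (subst borel_measurable_euclidean_space, intro ballI)
  fix b :: vec2 assume "b \<in> Basis"
  then obtain i where b: "b = axis i 1" by (auto simp: Basis_vec_def)
  show "(\<lambda>x. eta x \<bullet> b) \<in> borel_measurable borel"
    unfolding b inner_axis eta_def n1_def n2_def by (cases i) simp_all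
qed


lemma ub:
  assumes pr: "polar_rep W G \<mu> \<xi>" and om: "\<omega> \<in> test_forms W" and sub: "tsupp \<omega> \<subseteq> V"
    and ad: "\<forall>z. adm (\<omega> z)"
  shows "ennreal (G \<omega>) \<le> (\<integral>\<^sup>+ z. indicator V z * ennreal (Phi (\<xi> z)) \<partial>\<mu>)"
proof -
  have G: "G \<omega> = (\<integral> z. \<omega> z \<bullet> \<xi> z \<partial>\<mu>)" using pr om by (simp add: polar_rep_def)
  have pt: "ennreal (\<omega> z \<bullet> \<xi> z) \<le> indicator V z * ennreal (Phi (\<xi> z))" for z
  proof (cases "z \<in> V")
    case True
    have "\<omega> z \<bullet> \<xi> z \<le> Phi (\<xi> z)" using adm_le ad by blast
    then have "ennreal (\<omega> z \<bullet> \<xi> z) \<le> ennreal (Phi (\<xi> z))" by (rule ennreal_leI)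
    then show ?thesis using True by simp
  next
    case False
    have "z \<notin> tsupp \<omega>" using sub False by blast
    have "{z. \<omega> z \<noteq> 0} \<subseteq> tsupp \<omega>" unfolding tsupp_def by (rule closure_subset)
    with \<open>z \<notin> tsupp \<omega>\<close> have "\<omega> z = 0" by blast
    then show ?thesis by simp
  qed
  have nn: "(\<integral>\<^sup>+ z. ennreal (\<omega> z \<bullet> \<xi> z) \<partial>\<mu>) \<le> (\<integral>\<^sup>+ z. indicator V z * ennreal (Phi (\<xi> z)) \<partial>\<mu>)"
    by (rule nn_integral_mono) (rule pt)
  show ?thesis
  proof (cases "(\<integral>\<^sup>+ z. indicator V z * ennreal (Phi (\<xi> z)) \<partial>\<mu>) = \<infinity>")
    case True then show ?thesis by simp
  next
    case False
    then obtain r where r: "(\<integral>\<^sup>+ z. indicator V z * ennreal (Phi (\<xi> z)) \<partial>\<mu>) = ennreal r" "r \<ge> 0"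
      by (cases "(\<integral>\<^sup>+ z. indicator V z * ennreal (Phi (\<xi> z)) \<partial>\<mu>)" rule: ennreal_cases) auto
    have "(\<integral> z. \<omega> z \<bullet> \<xi> z \<partial>\<mu>) \<le> r"
      by (rule integral_real_bounded) (use r nn in auto)
    then show ?thesis using G r by (simp add: ennreal_leI)
  qed
qed

lemma liminf_step:
  assumes "(\<lambda>n. g n) \<longlonglongrightarrow> t" "\<And>n. ennreal (g n) \<le> I n"
  shows "ennreal t \<le> liminf I"
proof -
  have "(\<lambda>n. ennreal (g n)) \<longlonglongrightarrow> ennreal t" using assms(1) by (rule tendsto_ennrealI)
  then have "liminf (\<lambda>n. ennreal (g n)) = ennreal t" by (intro lim_imp_Liminf) auto
  moreover have "liminf (\<lambda>n. ennreal (g n)) \<le> liminf I" by (intro Liminf_mono) (use assms(2) in auto)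
  ultimately show ?thesis by simp
qed

lemma exhaust:
  fixes V :: "pt set"
  assumes "open V"
  obtains K where "\<And>m. compact (K m)" "\<And>m. K m \<subseteq> V" "incseq K" "(\<Union>m. K m) = V"
proof -
  define K where "K m = - (\<Union>y\<in>-V. ball y (1 / (real m + 1))) \<inter> cball 0 (real m)" for m
  have mem: "z \<in> K m \<longleftrightarrow> (\<forall>y. y \<notin> V \<longrightarrow> \<not> dist y z < 1 / (real m + 1)) \<and> norm z \<le> real m" for z m
    unfolding K_def by auto
  show ?thesis
  proof (rule that[of K])
    show "compact (K m)" for m unfolding K_def
      by (intro closed_Int_compact) (auto intro!: open_UN)
    show "K m \<subseteq> V" for m
    proof
      fix z assume "z \<in> K m"
      then have h: "\<forall>y. y \<notin> V \<longrightarrow> \<not> dist y z < 1 / (real m + 1)" using mem by blast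
      have "0 < 1 / (real m + 1)" by simp
      then show "z \<in> V" using h[rule_format, of z] by auto
    qed
    show "incseq K"
    proof (rule incseq_SucI, rule subsetI)
      fix m z assume z: "z \<in> K m"
      have le: "1 / (real (Suc m) + 1) \<le> 1 / (real m + 1)" by (simp add: frac_le)
      have "norm z \<le> real (Suc m)" using z mem by auto
      moreover have "\<not> dist y z < 1 / (real (Suc m) + 1)" if "y \<notin> V" for y
      proof -
        have "\<not> dist y z < 1 / (real m + 1)" using z mem that by blast
        then show ?thesis using le by linarith
      qed
      ultimately show "z \<in> K (Suc m)" using mem by blast
    qed
    show "(\<Union>m. K m) = V"
    proof
      show "(\<Union>m. K m) \<subseteq> V" using \<open>\<And>m. K m \<subseteq> V\<close> by blast
      show "V \<subseteq> (\<Union>m. K m)"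
      proof
        fix z assume "z \<in> V"
        then obtain \<epsilon> where \<epsilon>: "\<epsilon> > 0" "ball z \<epsilon> \<subseteq> V" using assms open_contains_ball by blast
        obtain m1 :: nat where m1: "1 / \<epsilon> < real m1" using reals_Archimedean2 by blast
        obtain m2 :: nat where m2: "norm z \<le> real m2" using real_arch_simple by blast
        define m where "m = max m1 m2"
        have "1 / (real m + 1) < \<epsilon>"
        proof -
          have "1 / \<epsilon> < real m + 1" using m1 by (simp add: m_def)
          then show ?thesis using \<epsilon>(1) by (simp add: divide_less_eq mult.commute)
        qed
        moreover have "norm z \<le> real m" using m2 by (simp add: m_def)
        moreover have "\<not> dist y z < 1 / (real m + 1)" if "y \<notin> V" for y
        proof
          assume "dist y z < 1 / (real m + 1)"
          with \<open>1 / (real m + 1) < \<epsilon>\<close> have "y \<in> ball z \<epsilon>" by (simp add: dist_commute)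
          with \<epsilon>(2) that show False by blast
        qed
        ultimately have "z \<in> K m" using mem by blast
        then show "z \<in> (\<Union>m. K m)" by blast
      qed
    qed
  qed
qed


lemma dens_emeasure:
  fixes \<mu> :: "'a::topological_space measure"
  assumes sb: "sets \<mu> = sets borel" and K: "K \<in> sets borel" and A: "A \<in> sets borel"
  shows "emeasure (density \<mu> (indicator K)) A = emeasure \<mu> (A \<inter> K)"
proof -
  have m: "(indicator K :: 'a \<Rightarrow> ennreal) \<in> borel_measurable \<mu>"
    using K sb by (simp add: measurable_cong_sets[OF sb refl] borel_measurable_indicator)
  have "emeasure (density \<mu> (indicator K)) A = (\<integral>\<^sup>+ x. indicator K x * indicator A x \<partial>\<mu>)"
    by (rule emeasure_density[OF m]) (simp add: sb A)
  also have "\<dots> = (\<integral>\<^sup>+ x. indicator (A \<inter> K) x \<partial>\<mu>)"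
    by (intro nn_integral_cong) (auto simp: indicator_def)
  also have "\<dots> = emeasure \<mu> (A \<inter> K)"
    using A K sb by (intro nn_integral_indicator) auto
  finally show ?thesis .
qed

lemma inner_cpt:
  fixes \<mu> :: "pt measure"
  assumes sb: "sets \<mu> = sets borel" and K: "K \<in> sets borel" "emeasure \<mu> K < \<infinity>"
    and E: "E \<in> sets borel" "E \<subseteq> K" and e: "e > 0"
  obtains C where "compact C" "C \<subseteq> E" "measure \<mu> E \<le> measure \<mu> C + e"
proof -
  define \<nu> where "\<nu> = density \<mu> (indicator K)"
  have snu: "sets \<nu> = sets borel" unfolding \<nu>_def using sb by simp
  have spnu: "space \<nu> = UNIV" using snu by (metis sets_eq_imp_space_eq space_borel)
  have fin: "emeasure \<nu> (space \<nu>) \<noteq> \<infinity>"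
    using dens_emeasure[OF sb K(1), of UNIV] K(2) spnu by (simp add: \<nu>_def)
  have nuA: "emeasure \<nu> A = emeasure \<mu> A" if "A \<in> sets borel" "A \<subseteq> K" for A
    using dens_emeasure[OF sb K(1) that(1)] that(2) by (simp add: \<nu>_def Int_absorb2)
  have Kf: "K \<in> fmeasurable \<mu>" using K sb by (auto simp: fmeasurable_def)
  have Ef: "E \<in> fmeasurable \<mu>" using fmeasurableI2[OF Kf E(2)] E(1) sb by auto
  show ?thesis
  proof (cases "measure \<mu> E \<le> e")
    case True
    then show ?thesis by (intro that[of "{}"]) auto
  next
    case False
    have reg: "emeasure \<nu> E = (SUP C \<in> {C. C \<subseteq> E \<and> compact C}. emeasure \<nu> C)"
      by (rule inner_regular[OF snu fin E(1)])
    have "ennreal (measure \<mu> E - e) < ennreal (measure \<mu> E)"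
      using False e by (subst ennreal_less_iff) auto
    also have "\<dots> = emeasure \<nu> E" using nuA[OF E] emeasure_eq_measure2[OF Ef] by simp
    finally obtain C where C: "C \<subseteq> E" "compact C" "ennreal (measure \<mu> E - e) < emeasure \<nu> C"
      unfolding reg less_SUP_iff by blast
    have Cb: "C \<in> sets borel" using C(2) by (simp add: compact_imp_closed borel_closed)
    have Cf: "C \<in> fmeasurable \<mu>" using fmeasurableI2[OF Ef C(1)] Cb sb by auto
    have "emeasure \<nu> C = ennreal (measure \<mu> C)"
      using nuA[OF Cb] C(1) E(2) emeasure_eq_measure2[OF Cf] by simp
    with C(3) have "ennreal (measure \<mu> E - e) < ennreal (measure \<mu> C)" by simp
    then have "measure \<mu> E - e < measure \<mu> C"
      using False by (subst (asm) ennreal_less_iff) auto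
    then show ?thesis using C by (intro that[of C]) auto
  qed
qed

lemma outer_nb:
  fixes \<mu> :: "pt measure"
  assumes sb: "sets \<mu> = sets borel" and K: "K1 \<in> sets borel" "emeasure \<mu> K1 < \<infinity>"
    and C: "compact C" "open Op" "C \<subseteq> Op" "Op \<subseteq> K1" and e: "e > 0"
  obtains r where "r > 0" "(\<Union>c\<in>C. ball c r) \<subseteq> Op" "measure \<mu> (\<Union>c\<in>C. ball c r) \<le> measure \<mu> C + e"
proof -
  define \<nu> where "\<nu> = density \<mu> (indicator K1)"
  have snu: "sets \<nu> = sets borel" unfolding \<nu>_def using sb by simp
  have spnu: "space \<nu> = UNIV" using snu by (metis sets_eq_imp_space_eq space_borel)
  have fin: "emeasure \<nu> (space \<nu>) \<noteq> \<infinity>"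
    using dens_emeasure[OF sb K(1), of UNIV] K(2) spnu by (simp add: \<nu>_def)
  have Kf: "K1 \<in> fmeasurable \<mu>" using K sb by (auto simp: fmeasurable_def)
  have Cb: "C \<in> sets borel" using C(1) by (simp add: compact_imp_closed borel_closed)
  have Cf: "C \<in> fmeasurable \<mu>" using fmeasurableI2[OF Kf _ ] Cb sb C by auto
  have reg: "emeasure \<nu> C = (INF U \<in> {U. C \<subseteq> U \<and> open U}. emeasure \<nu> U)"
    by (rule outer_regular[OF snu fin Cb])
  have "emeasure \<nu> C = emeasure \<mu> C"
    using dens_emeasure[OF sb K(1) Cb] C by (simp add: \<nu>_def Int_absorb2)
  also have "\<dots> = ennreal (measure \<mu> C)" using emeasure_eq_measure2[OF Cf] .
  also have "\<dots> < ennreal (measure \<mu> C + e)" using e by (subst ennreal_less_iff) auto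
  finally obtain U where U: "C \<subseteq> U" "open U" "emeasure \<nu> U < ennreal (measure \<mu> C + e)"
    unfolding reg INF_less_iff by blast
  have "C \<subseteq> U \<inter> Op" using U C by auto
  then obtain r where r: "r > 0" "(\<Union>c\<in>C. ball c r) \<subseteq> U \<inter> Op"
    using compact_subset_open_imp_ball_epsilon_subset[OF C(1), of "U \<inter> Op"] U(2) C(2) by blast
  have Bb: "(\<Union>c\<in>C. ball c r) \<in> sets borel" by (intro borel_open open_UN) auto
  have UKb: "U \<inter> K1 \<in> sets borel" using U(2) K(1) by auto
  have UKf: "U \<inter> K1 \<in> fmeasurable \<mu>" using fmeasurableI2[OF Kf _ ] UKb sb by auto
  have "emeasure \<nu> U = emeasure \<mu> (U \<inter> K1)"
    using dens_emeasure[OF sb K(1)] U(2) by (simp add: \<nu>_def)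
  with U(3) have "ennreal (measure \<mu> (U \<inter> K1)) < ennreal (measure \<mu> C + e)"
    using emeasure_eq_measure2[OF UKf] by simp
  then have "measure \<mu> (U \<inter> K1) < measure \<mu> C + e"
    by (subst (asm) ennreal_less_iff) auto
  moreover have "measure \<mu> (\<Union>c\<in>C. ball c r) \<le> measure \<mu> (U \<inter> K1)"
    by (rule measure_mono_fmeasurable[OF _ _ UKf]) (use r C(4) Bb sb in auto)
  ultimately show ?thesis using r by (intro that[of r]) auto
qed


lemma simple_approx:
  fixes \<mu> :: "pt measure" and \<xi> :: "pt \<Rightarrow> vec2"
  assumes sb: "sets \<mu> = sets borel" and xm: "\<xi> \<in> borel_measurable borel"
    and ae: "AE z in \<mu>. norm (\<xi> z) = 1" and K: "K \<in> sets borel" "emeasure \<mu> K < \<infinity>" and e: "e > 0"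
  obtains G where "simple_function \<mu> G" "\<forall>z. adm (G z)"
    "(\<integral> z. indicator K z * Phi (\<xi> z) \<partial>\<mu>) \<le> (\<integral> z. indicator K z * (G z \<bullet> \<xi> z) \<partial>\<mu>) + e"
proof -
  have xmu[measurable]: "\<xi> \<in> borel_measurable \<mu>" using xm measurable_cong_sets[OF sb refl] by blast
  have Kmu[measurable]: "K \<in> sets \<mu>" using K sb by simp
  have gm: "(\<lambda>z. eta (\<xi> z)) \<in> borel_measurable \<mu>"
    using measurable_compose[OF xmu eta_meas] by (simp add: o_def)
  obtain F where F: "\<And>i. simple_function \<mu> (F i)" "\<And>x. x \<in> space \<mu> \<Longrightarrow> (\<lambda>i. F i x) \<longlonglongrightarrow> eta (\<xi> x)"
    using borel_measurable_implies_sequence_metric[OF gm, of 0] by blast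
  define Gs where "Gs i = Ret \<circ> F i" for i
  have Gss: "simple_function \<mu> (Gs i)" for i unfolding Gs_def using F(1) by simp
  have Gsm[measurable]: "Gs i \<in> borel_measurable \<mu>" for i by (rule borel_measurable_simple_function[OF Gss])
  have spU: "space \<mu> = UNIV" using sb by (metis sets_eq_imp_space_eq space_borel)
  have Gslim: "(\<lambda>i. Gs i z) \<longlonglongrightarrow> eta (\<xi> z)" for z
  proof -
    have "isCont Ret (eta (\<xi> z))" using Ret_cont continuous_on_eq_continuous_at open_UNIV by blast
    from isCont_tendsto_compose[OF this F(2)] have "(\<lambda>i. Ret (F i z)) \<longlonglongrightarrow> Ret (eta (\<xi> z))"
      using spU by simp
    then show ?thesis using Ret_adm[OF adm_eta] by (simp add: Gs_def)
  qed
  define s where "s i z = indicator K z * (Gs i z \<bullet> \<xi> z)" for i z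
  define f where "f z = indicator K z * (eta (\<xi> z) \<bullet> \<xi> z)" for z
  have sm: "s i \<in> borel_measurable \<mu>" for i unfolding s_def[abs_def] by measurable
  have fm: "f \<in> borel_measurable \<mu>" unfolding f_def[abs_def] using gm by measurable
  have wi: "integrable \<mu> (\<lambda>z. 2 * indicator K z :: real)"
    using K Kmu by (intro integrable_mult_right integrable_real_indicator) auto
  have lim: "AE z in \<mu>. (\<lambda>i. s i z) \<longlonglongrightarrow> f z"
    unfolding s_def f_def by (intro AE_I2 tendsto_mult tendsto_const tendsto_inner Gslim)
  have bnd: "AE z in \<mu>. norm (s i z) \<le> 2 * indicator K z" for i
    using ae
  proof (rule AE_mp, intro AE_I2 impI)
    fix z assume "norm (\<xi> z) = 1"
    then have "\<bar>Gs i z \<bullet> \<xi> z\<bar> \<le> 2" using adm_inner_bound[of "Gs i z" "\<xi> z"] adm_Ret by (simp add: Gs_def)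
    then show "norm (s i z) \<le> 2 * indicator K z" by (simp add: s_def indicator_def)
  qed
  have conv: "(\<lambda>i. integral\<^sup>L \<mu> (s i)) \<longlonglongrightarrow> integral\<^sup>L \<mu> f"
    by (rule integral_dominated_convergence[OF fm sm wi lim bnd])
  then obtain i where i: "dist (integral\<^sup>L \<mu> (s i)) (integral\<^sup>L \<mu> f) < e"
    using e unfolding lim_sequentially by blast
  have feq: "f = (\<lambda>z. indicator K z * Phi (\<xi> z))" by (simp add: f_def[abs_def] eta_inner)
  show ?thesis
  proof (rule that[of "Gs i"])
    show "simple_function \<mu> (Gs i)" by (rule Gss)
    show "\<forall>z. adm (Gs i z)" by (simp add: Gs_def adm_Ret)
    show "(\<integral> z. indicator K z * Phi (\<xi> z) \<partial>\<mu>) \<le> (\<integral> z. indicator K z * (Gs i z \<bullet> \<xi> z) \<partial>\<mu>) + e"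
      using i unfolding feq s_def[abs_def] dist_real_def by linarith
  qed
qed


lemma psi_build:
  fixes Rg :: "vec2 set" and C :: "vec2 \<Rightarrow> pt set"
  assumes "\<forall>w\<in>Rg. compact (C w)" "r > 0" "\<delta> > 0"
  obtains \<psi> :: "vec2 \<Rightarrow> pt \<Rightarrow> real" where "\<forall>w\<in>Rg. (\<forall>n. Ck n (\<psi> w)) \<and> (\<forall>z. 0 \<le> \<psi> w z \<and> \<psi> w z \<le> 1) \<and>
     (\<forall>z\<in>C w. 1 - \<delta> \<le> \<psi> w z) \<and> compact (tsupp (\<psi> w)) \<and> tsupp (\<psi> w) \<subseteq> (\<Union>c\<in>C w. ball c r)"
proof -
  have "\<exists>p :: pt \<Rightarrow> real. (\<forall>n. Ck n p) \<and> (\<forall>z. 0 \<le> p z \<and> p z \<le> 1) \<and>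
     (\<forall>z\<in>C w. 1 - \<delta> \<le> p z) \<and> compact (tsupp p) \<and> tsupp p \<subseteq> (\<Union>c\<in>C w. ball c r)" if "w \<in> Rg" for w
  proof -
    have r2: "r / 2 > 0" using assms by simp
    have Cw: "compact (C w)" using assms(1) that by blast
    obtain p :: "pt \<Rightarrow> real" where p: "\<forall>n. Ck n p" "\<And>z. 0 \<le> p z" "\<And>z. p z \<le> 1" "\<And>z. z \<in> C w \<Longrightarrow> p z \<ge> 1 - \<delta>"
      "compact (tsupp p)" "tsupp p \<subseteq> (\<Union>c\<in>C w. cball c (r/2))"
      using smooth_urysohn[OF Cw r2 assms(3)] by blast
    have "(\<Union>c\<in>C w. cball c (r/2)) \<subseteq> (\<Union>c\<in>C w. ball c r)" using assms(2) by auto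
    then show ?thesis using p by (intro exI[of _ p]) auto
  qed
  then have "\<forall>w\<in>Rg. \<exists>p :: pt \<Rightarrow> real. (\<forall>n. Ck n p) \<and> (\<forall>z. 0 \<le> p z \<and> p z \<le> 1) \<and>
     (\<forall>z\<in>C w. 1 - \<delta> \<le> p z) \<and> compact (tsupp p) \<and> tsupp p \<subseteq> (\<Union>c\<in>C w. ball c r)" by blast
  then obtain \<psi> where "\<forall>w\<in>Rg. (\<forall>n. Ck n (\<psi> w)) \<and> (\<forall>z. 0 \<le> \<psi> w z \<and> \<psi> w z \<le> 1) \<and>
     (\<forall>z\<in>C w. 1 - \<delta> \<le> \<psi> w z) \<and> compact (tsupp (\<psi> w)) \<and> tsupp (\<psi> w) \<subseteq> (\<Union>c\<in>C w. ball c r)"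
    using bchoice by metis
  then show ?thesis by (rule that)
qed

lemma tsupp_zero: "z \<notin> tsupp f \<Longrightarrow> f z = 0"
proof -
  assume "z \<notin> tsupp f"
  moreover have "{z. f z \<noteq> 0} \<subseteq> tsupp f" unfolding tsupp_def by (rule closure_subset)
  ultimately show ?thesis by blast
qed

lemma omega_props:
  fixes Rg :: "vec2 set" and C :: "vec2 \<Rightarrow> pt set" and \<psi> :: "vec2 \<Rightarrow> pt \<Rightarrow> real"
  assumes fin: "finite Rg" and ad: "\<forall>w\<in>Rg. adm w"
    and disj: "\<forall>w\<in>Rg. \<forall>w'\<in>Rg. w \<noteq> w' \<longrightarrow> (\<Union>c\<in>C w. ball c r) \<inter> (\<Union>c\<in>C w'. ball c r) = {}"
    and ps: "\<forall>w\<in>Rg. (\<forall>n. Ck n (\<psi> w)) \<and> (\<forall>z. 0 \<le> \<psi> w z \<and> \<psi> w z \<le> 1) \<and>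
     compact (tsupp (\<psi> w)) \<and> tsupp (\<psi> w) \<subseteq> (\<Union>c\<in>C w. ball c r)"
  defines "\<omega> \<equiv> (\<lambda>z. \<Sum>w\<in>Rg. \<psi> w z *\<^sub>R w)"
  shows "\<forall>n. Ck n \<omega>" "compact (tsupp \<omega>)" "tsupp \<omega> \<subseteq> (\<Union>w\<in>Rg. tsupp (\<psi> w))" "\<forall>z. adm (\<omega> z)"
proof -
  show "\<forall>n. Ck n \<omega>"
  proof
    fix n
    show "Ck n \<omega>" unfolding \<omega>_def
    proof (rule Ck_sum[OF fin])
      fix w assume "w \<in> Rg"
      then have "Ck n (\<psi> w)" using ps by blast
      then show "Ck n (\<lambda>z. \<psi> w z *\<^sub>R w)" by (rule Ck_blin[OF bounded_linear_scaleR_left])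
    qed
  qed
  have cl: "closed (\<Union>w\<in>Rg. tsupp (\<psi> w))" using fin by (intro closed_UN) (auto simp: tsupp_def)
  show sub: "tsupp \<omega> \<subseteq> (\<Union>w\<in>Rg. tsupp (\<psi> w))"
  proof (rule tsupp_subset_closed[OF cl])
    fix z assume "\<omega> z \<noteq> 0"
    then obtain w where "w \<in> Rg" "\<psi> w z *\<^sub>R w \<noteq> 0" unfolding \<omega>_def by (rule sum.not_neutral_contains_not_neutral)
    then have "\<psi> w z \<noteq> 0" by auto
    then have "z \<in> tsupp (\<psi> w)" using tsupp_zero by blast
    then show "z \<in> (\<Union>w\<in>Rg. tsupp (\<psi> w))" using \<open>w \<in> Rg\<close> by blast
  qed
  show "compact (tsupp \<omega>)"
  proof -
    have "compact ((\<Union>w\<in>Rg. tsupp (\<psi> w)) \<inter> tsupp \<omega>)"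
    proof (rule compact_Int_closed)
      show "compact (\<Union>w\<in>Rg. tsupp (\<psi> w))" using fin ps by (intro compact_UN) auto
      show "closed (tsupp \<omega>)" unfolding tsupp_def by (rule closed_closure)
    qed
    then show ?thesis using sub by (simp add: Int_absorb1)
  qed
  show "\<forall>z. adm (\<omega> z)"
  proof
    fix z
    show "adm (\<omega> z)"
    proof (cases "\<exists>w\<in>Rg. z \<in> (\<Union>c\<in>C w. ball c r)")
      case True
      then obtain w where w: "w \<in> Rg" "z \<in> (\<Union>c\<in>C w. ball c r)" by blast
      have "\<psi> w' z = 0" if "w' \<in> Rg" "w' \<noteq> w" for w'
      proof -
        have "z \<notin> (\<Union>c\<in>C w'. ball c r)" using disj w that by blast
        then have "z \<notin> tsupp (\<psi> w')" using ps that by blast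
        then show ?thesis by (rule tsupp_zero)
      qed
      then have "\<omega> z = \<psi> w z *\<^sub>R w" unfolding \<omega>_def
        by (subst sum.remove[OF fin w(1)]) (auto intro!: sum.neutral)
      moreover have "0 \<le> \<psi> w z" "\<psi> w z \<le> 1" using ps w(1) by blast+
      ultimately show ?thesis using w(1) ad by (simp add: adm_scale)
    next
      case False
      have "\<psi> w z = 0" if "w \<in> Rg" for w
      proof -
        have "z \<notin> tsupp (\<psi> w)" using ps that False by blast
        then show ?thesis by (rule tsupp_zero)
      qed
      then have "\<omega> z = 0" unfolding \<omega>_def by (auto intro!: sum.neutral)
      then show ?thesis by (simp add: adm_0)
    qed
  qed
qed

lemma pw_bound:
  fixes a b p B :: "vec2 \<Rightarrow> real"
  assumes "\<forall>w\<in>R. \<bar>p w\<bar> \<le> 2" "\<forall>w\<in>R. \<bar>a w - b w\<bar> \<le> B w"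
  shows "(\<Sum>w\<in>R. b w * p w) - (\<Sum>w\<in>R. 2 * B w) \<le> (\<Sum>w\<in>R. a w * p w)"
proof -
  have "b w * p w - 2 * B w \<le> a w * p w" if "w \<in> R" for w
  proof -
    have "\<bar>(a w - b w) * p w\<bar> \<le> B w * 2"
      unfolding abs_mult using assms that by (intro mult_mono) auto
    then show ?thesis by (simp add: algebra_simps abs_le_iff)
  qed
  then have "(\<Sum>w\<in>R. b w * p w - 2 * B w) \<le> (\<Sum>w\<in>R. a w * p w)" by (rule sum_mono)
  then show ?thesis by (simp add: sum_subtractf)
qed

lemma Phi_cont: "continuous_on UNIV Phi"
  unfolding Phi_def by (intro continuous_intros)

lemma Phi_meas: "Phi \<in> borel_measurable borel"
  by (rule borel_measurable_continuous_onI[OF Phi_cont])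

lemma Phi_nonneg: "Phi x \<ge> 0" by (simp add: Phi_def)

lemma Phi_bound: assumes "norm x \<le> 1" shows "Phi x \<le> 2"
proof -
  have "\<bar>eta x \<bullet> x\<bar> \<le> 2" by (rule adm_inner_bound[OF adm_eta assms])
  then show ?thesis using eta_inner[of x] by linarith
qed

lemma approx:
  assumes pT: "polar_rep W T \<mu> \<xi>" and oV: "open V" and VW: "V \<subseteq> W" and cK: "compact K"
    and KV: "K \<subseteq> V" and e: "e > 0"
  obtains \<omega> where "\<omega> \<in> test_forms W" "tsupp \<omega> \<subseteq> V" "\<forall>z. adm (\<omega> z)"
    "(\<integral>\<^sup>+ z. indicator K z * ennreal (Phi (\<xi> z)) \<partial>\<mu>) \<le> ennreal (T \<omega>) + ennreal e"
proof -
  have sb: "sets \<mu> = sets borel" and loc: "\<forall>K. compact K \<and> K \<subseteq> W \<longrightarrow> emeasure \<mu> K < \<infinity>"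
    and xm: "\<xi> \<in> borel_measurable borel" and ae: "AE z in \<mu>. norm (\<xi> z) = 1"
    and Trep: "\<forall>\<omega>\<in>test_forms W. T \<omega> = (\<integral> z. \<omega> z \<bullet> \<xi> z \<partial>\<mu>)"
    using pT unfolding polar_rep_def by blast+
  have spU: "space \<mu> = UNIV" using sb by (metis sets_eq_imp_space_eq space_borel)
  have xmu[measurable]: "\<xi> \<in> borel_measurable \<mu>" using xm measurable_cong_sets[OF sb refl] by blast
  obtain \<epsilon> where \<epsilon>: "\<epsilon> > 0" "(\<Union>x\<in>K. cball x \<epsilon>) \<subseteq> V"
    using compact_subset_open_imp_cball_epsilon_subset[OF cK oV KV] by blast
  define Op where "Op = (\<Union>x\<in>K. ball x (\<epsilon>/2))"
  define K1 where "K1 = closure Op"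
  have oOp: "open Op" unfolding Op_def by auto
  have KOp: "K \<subseteq> Op" unfolding Op_def using \<epsilon>(1) by force
  have OpK1: "Op \<subseteq> K1" unfolding K1_def by (rule closure_subset)
  have K1V: "K1 \<subseteq> V"
  proof
    fix z assume "z \<in> K1"
    then obtain y where y: "y \<in> Op" "dist y z < \<epsilon>/2"
      using closure_approachable[of z Op] \<epsilon>(1) unfolding K1_def by (metis half_gt_zero)
    then obtain x where x: "x \<in> K" "dist x y < \<epsilon>/2" unfolding Op_def by auto
    then have "dist x z \<le> \<epsilon>" using y(2) dist_triangle[of x z y] by linarith
    then have "z \<in> cball x \<epsilon>" by simp
    then show "z \<in> V" using \<epsilon>(2) x(1) by blast
  qed
  have cK1: "compact K1"
  proof -
    obtain R where R: "\<forall>x\<in>K. norm x \<le> R" using compact_imp_bounded[OF cK] unfolding bounded_pos by blast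
    have "Op \<subseteq> cball 0 (R + \<epsilon>)"
    proof
      fix z assume "z \<in> Op"
      then obtain x where x: "x \<in> K" "dist x z < \<epsilon>/2" unfolding Op_def by auto
      then have "dist 0 x \<le> R" using R by simp
      moreover have "dist 0 z \<le> dist 0 x + dist x z" by (rule dist_triangle)
      ultimately show "z \<in> cball 0 (R + \<epsilon>)" using x(2) \<epsilon>(1) unfolding mem_cball by linarith
    qed
    then have "K1 \<subseteq> cball 0 (R + \<epsilon>)" unfolding K1_def by (rule closure_minimal) auto
    moreover have "compact (cball 0 (R + \<epsilon>) \<inter> K1)" by (rule compact_Int_closed) (auto simp: K1_def)
    ultimately show ?thesis by (simp add: Int_absorb1)
  qed
  have K1b: "K1 \<in> sets borel" unfolding K1_def by (rule borel_closed) auto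
  have K1f: "emeasure \<mu> K1 < \<infinity>" using loc cK1 K1V VW by blast
  have Kb: "K \<in> sets borel" using cK by (simp add: compact_imp_closed borel_closed)
  have Kf: "emeasure \<mu> K < \<infinity>" using loc cK KV VW by blast
  have Kfm: "K \<in> fmeasurable \<mu>" using Kb Kf sb by (auto simp: fmeasurable_def)
  have K1fm: "K1 \<in> fmeasurable \<mu>" using K1b K1f sb by (auto simp: fmeasurable_def)
  define mK where "mK = measure \<mu> K"
  have mK0: "mK \<ge> 0" by (simp add: mK_def)
  have e2: "e/2 > 0" using e by simp
  obtain G where G: "simple_function \<mu> G" "\<forall>z. adm (G z)"
    "(\<integral> z. indicator K z * Phi (\<xi> z) \<partial>\<mu>) \<le> (\<integral> z. indicator K z * (G z \<bullet> \<xi> z) \<partial>\<mu>) + e/2"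
    using simple_approx[OF sb xm ae Kb Kf e2] by blast
  define Rg where "Rg = G ` UNIV"
  have finRg: "finite Rg" using G(1) spU unfolding simple_function_def Rg_def by simp
  have Rgne: "Rg \<noteq> {}" unfolding Rg_def by simp
  have admRg: "\<forall>w\<in>Rg. adm w" using G(2) unfolding Rg_def by auto
  define n where "n = card Rg"
  have npos: "n > 0" using finRg Rgne by (simp add: n_def card_gt_0_iff)
  define E where "E w = G -` {w} \<inter> K" for w
  have Gm[measurable]: "G \<in> borel_measurable \<mu>" by (rule borel_measurable_simple_function[OF G(1)])
  have Eb: "E w \<in> sets borel" for w
  proof -
    have "G -` {w} \<inter> space \<mu> \<in> sets \<mu>" by (rule measurable_sets[OF Gm]) simp
    then show ?thesis unfolding E_def using sb Kb spU by auto
  qed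
  have EK: "E w \<subseteq> K" for w unfolding E_def by auto
  define e1 where "e1 = e / (16 * real n)"
  have e1: "e1 > 0" using e npos by (simp add: e1_def)
  define \<delta> where "\<delta> = e / (8 * real n * (mK + 1))"
  have \<delta>: "\<delta> > 0" using e npos mK0 by (simp add: \<delta>_def)
  have "\<forall>w\<in>Rg. \<exists>Cw. compact Cw \<and> Cw \<subseteq> E w \<and> measure \<mu> (E w) \<le> measure \<mu> Cw + e1"
  proof
    fix w assume "w \<in> Rg"
    obtain Cw where "compact Cw" "Cw \<subseteq> E w" "measure \<mu> (E w) \<le> measure \<mu> Cw + e1"
      using inner_cpt[OF sb Kb Kf Eb EK e1] by blast
    then show "\<exists>Cw. compact Cw \<and> Cw \<subseteq> E w \<and> measure \<mu> (E w) \<le> measure \<mu> Cw + e1" by blast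
  qed
  then obtain C where C: "\<forall>w\<in>Rg. compact (C w) \<and> C w \<subseteq> E w \<and> measure \<mu> (E w) \<le> measure \<mu> (C w) + e1"
    using bchoice by metis
  have Cb: "C w \<in> sets borel" if "w \<in> Rg" for w using C that by (simp add: compact_imp_closed borel_closed)
  have CK: "C w \<subseteq> K" if "w \<in> Rg" for w using C that EK by blast
  have COp: "C w \<subseteq> Op" if "w \<in> Rg" for w using CK[OF that] KOp by blast
  have "\<forall>w\<in>Rg. \<exists>r0. r0 > 0 \<and> (\<Union>c\<in>C w. ball c r0) \<subseteq> Op \<and> measure \<mu> (\<Union>c\<in>C w. ball c r0) \<le> measure \<mu> (C w) + e1"
  proof
    fix w assume w: "w \<in> Rg"
    have cw: "compact (C w)" using C w by blast
    obtain r0 where "r0 > 0" "(\<Union>c\<in>C w. ball c r0) \<subseteq> Op" "measure \<mu> (\<Union>c\<in>C w. ball c r0) \<le> measure \<mu> (C w) + e1"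
      using outer_nb[OF sb K1b K1f cw oOp COp[OF w] OpK1 e1] by blast
    then show "\<exists>r0. r0 > 0 \<and> (\<Union>c\<in>C w. ball c r0) \<subseteq> Op \<and> measure \<mu> (\<Union>c\<in>C w. ball c r0) \<le> measure \<mu> (C w) + e1" by blast
  qed
  then obtain r0 where r0: "\<forall>w\<in>Rg. r0 w > 0 \<and> (\<Union>c\<in>C w. ball c (r0 w)) \<subseteq> Op \<and> measure \<mu> (\<Union>c\<in>C w. ball c (r0 w)) \<le> measure \<mu> (C w) + e1"
    using bchoice by metis
  have "\<forall>w\<in>Rg. \<exists>s. s > 0 \<and> (\<forall>x\<in>C w. \<forall>y\<in>(\<Union>w'\<in>Rg - {w}. C w'). s \<le> dist x y)"
  proof
    fix w assume w: "w \<in> Rg"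
    have cw: "compact (C w)" using C w by blast
    have cl: "closed (\<Union>w'\<in>Rg - {w}. C w')" using finRg C by (intro closed_UN) (auto intro: compact_imp_closed)
    have dj: "C w \<inter> (\<Union>w'\<in>Rg - {w}. C w') = {}"
    proof -
      have "E w \<inter> E w' = {}" if "w' \<noteq> w" for w' unfolding E_def using that by auto
      then show ?thesis using C w by blast
    qed
    show "\<exists>s. s > 0 \<and> (\<forall>x\<in>C w. \<forall>y\<in>(\<Union>w'\<in>Rg - {w}. C w'). s \<le> dist x y)"
      using separate_compact_closed[OF cw cl dj] by blast
  qed
  then obtain s where s: "\<forall>w\<in>Rg. s w > 0 \<and> (\<forall>x\<in>C w. \<forall>y\<in>(\<Union>w'\<in>Rg - {w}. C w'). s w \<le> dist x y)"
    using bchoice by metis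
  define r where "r = Min ((\<lambda>w. min (r0 w) (s w / 3)) ` Rg)"
  have rpos: "r > 0" unfolding r_def using finRg Rgne r0 s by (subst Min_gr_iff) auto
  have rle: "r \<le> r0 w \<and> r \<le> s w / 3" if "w \<in> Rg" for w
  proof -
    have "r \<le> min (r0 w) (s w / 3)" unfolding r_def using finRg that by (intro Min_le) auto
    then show ?thesis by auto
  qed
  define Nb where "Nb w = (\<Union>c\<in>C w. ball c r)" for w
  have Nbsub: "Nb w \<subseteq> (\<Union>c\<in>C w. ball c (r0 w))" if "w \<in> Rg" for w unfolding Nb_def using rle[OF that] by auto
  have NbOp: "Nb w \<subseteq> Op" if "w \<in> Rg" for w using Nbsub[OF that] r0 that by blast
  have Nbb: "Nb w \<in> sets borel" for w unfolding Nb_def by (intro borel_open open_UN) auto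
  have CNb: "C w \<subseteq> Nb w" for w unfolding Nb_def using rpos by force
  have disj: "\<forall>w\<in>Rg. \<forall>w'\<in>Rg. w \<noteq> w' \<longrightarrow> (\<Union>c\<in>C w. ball c r) \<inter> (\<Union>c\<in>C w'. ball c r) = {}"
  proof (intro ballI impI)
    fix w w' assume w: "w \<in> Rg" "w' \<in> Rg" "w \<noteq> w'"
    show "(\<Union>c\<in>C w. ball c r) \<inter> (\<Union>c\<in>C w'. ball c r) = {}"
    proof (rule ccontr)
      assume "(\<Union>c\<in>C w. ball c r) \<inter> (\<Union>c\<in>C w'. ball c r) \<noteq> {}"
      then obtain z c c' where cc: "c \<in> C w" "c' \<in> C w'" "dist c z < r" "dist c' z < r" by auto
      then have "dist c c' < 2 * r" using dist_triangle[of c c' z] by (simp add: dist_commute)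
      moreover have "c' \<in> (\<Union>w''\<in>Rg - {w}. C w'')" using cc w by blast
      then have "s w \<le> dist c c'" using s w(1) cc(1) by blast
      moreover have "r \<le> s w / 3" using rle w(1) by blast
      moreover have "s w > 0" using s w(1) by blast
      ultimately show False by linarith
    qed
  qed
  obtain \<psi> where ps: "\<forall>w\<in>Rg. (\<forall>n. Ck n (\<psi> w)) \<and> (\<forall>z. 0 \<le> \<psi> w z \<and> \<psi> w z \<le> 1) \<and>
     (\<forall>z\<in>C w. 1 - \<delta> \<le> \<psi> w z) \<and> compact (tsupp (\<psi> w)) \<and> tsupp (\<psi> w) \<subseteq> (\<Union>c\<in>C w. ball c r)"
    using psi_build[of Rg C r \<delta>] C rpos \<delta> by blast
  define \<omega> where "\<omega> = (\<lambda>z. \<Sum>w\<in>Rg. \<psi> w z *\<^sub>R w)"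
  have ps': "\<forall>w\<in>Rg. (\<forall>n. Ck n (\<psi> w)) \<and> (\<forall>z. 0 \<le> \<psi> w z \<and> \<psi> w z \<le> 1) \<and> compact (tsupp (\<psi> w)) \<and> tsupp (\<psi> w) \<subseteq> (\<Union>c\<in>C w. ball c r)"
    using ps by blast
  note om = omega_props[OF finRg admRg disj ps', folded \<omega>_def]
  have tsOp: "tsupp \<omega> \<subseteq> Op"
    using om(3) ps NbOp unfolding Nb_def by blast
  have omT: "\<omega> \<in> test_forms W" unfolding test_forms_def smooth_def
    using om(1) om(2) tsOp OpK1 K1V VW by blast
  have tsV: "tsupp \<omega> \<subseteq> V" using tsOp OpK1 K1V by blast
  have omadm: "\<forall>z. adm (\<omega> z)" using om(4) by (simp add: \<omega>_def)
  have omc: "continuous_on UNIV \<omega>" using om(1) by (metis Ck.simps(1))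
  have omm[measurable]: "\<omega> \<in> borel_measurable \<mu>"
  proof -
    have "\<omega> \<in> borel_measurable borel" by (rule borel_measurable_continuous_onI[OF omc])
    then show ?thesis using measurable_cong_sets[OF sb refl] by blast
  qed
  have Kmu[measurable]: "K \<in> sets \<mu>" "K1 \<in> sets \<mu>" using Kb K1b sb by auto
  define f1 where "f1 z = \<omega> z \<bullet> \<xi> z" for z
  define f2 where "f2 z = indicator K z * (G z \<bullet> \<xi> z)" for z
  define B where "B w z = indicator (E w - C w) z + \<delta> * indicator (C w) z + indicator (Nb w - C w) z" for w z
  define f3 where "f3 z = (\<Sum>w\<in>Rg. 2 * B w z)" for z
  have i1: "integrable \<mu> f1"
  proof (rule Bochner_Integration.integrable_bound[where f="\<lambda>z. 2 * indicator K1 z :: real"])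
    show "integrable \<mu> (\<lambda>z. 2 * indicator K1 z :: real)"
      using Kmu K1f by (intro integrable_mult_right integrable_real_indicator) auto
    show "f1 \<in> borel_measurable \<mu>" unfolding f1_def[abs_def] by measurable
    show "AE z in \<mu>. norm (f1 z) \<le> norm (2 * indicator K1 z :: real)"
      using ae
    proof (rule AE_mp, intro AE_I2 impI)
      fix z assume nz: "norm (\<xi> z) = 1"
      show "norm (f1 z) \<le> norm (2 * indicator K1 z :: real)"
      proof (cases "z \<in> K1")
        case True
        have "\<bar>\<omega> z \<bullet> \<xi> z\<bar> \<le> 2" using adm_inner_bound[of "\<omega> z" "\<xi> z"] omadm nz by simp
        then show ?thesis using True by (simp add: f1_def)
      next
        case False
        then have "z \<notin> tsupp \<omega>" using tsOp OpK1 by blast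
        then have "\<omega> z = 0" by (rule tsupp_zero)
        then show ?thesis by (simp add: f1_def)
      qed
    qed
  qed
  have i2: "integrable \<mu> f2"
  proof (rule Bochner_Integration.integrable_bound[where f="\<lambda>z. 2 * indicator K z :: real"])
    show "integrable \<mu> (\<lambda>z. 2 * indicator K z :: real)"
      using Kmu Kf by (intro integrable_mult_right integrable_real_indicator) auto
    show "f2 \<in> borel_measurable \<mu>" unfolding f2_def[abs_def] by measurable
    show "AE z in \<mu>. norm (f2 z) \<le> norm (2 * indicator K z :: real)"
      using ae
    proof (rule AE_mp, intro AE_I2 impI)
      fix z assume nz: "norm (\<xi> z) = 1"
      have "\<bar>G z \<bullet> \<xi> z\<bar> \<le> 2" using adm_inner_bound[of "G z" "\<xi> z"] G(2) nz by simp
      then show "norm (f2 z) \<le> norm (2 * indicator K z :: real)" by (simp add: f2_def indicator_def)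
    qed
  qed
  have fin_sub: "emeasure \<mu> A < \<infinity>" if "A \<in> sets \<mu>" "A \<subseteq> K1" for A
    using emeasure_mono[OF that(2) Kmu(2)] K1f by simp
  have Cmu: "C w \<in> sets \<mu>" "E w \<in> sets \<mu>" "Nb w \<in> sets \<mu>" if "w \<in> Rg" for w
    using Cb[OF that] Eb Nbb sb by auto
  have KK1: "K \<subseteq> K1" using KOp OpK1 by blast
  have iB: "integrable \<mu> (B w)" if w: "w \<in> Rg" for w
  proof -
    have s1: "E w - C w \<subseteq> K1" using EK KK1 by blast
    have s2: "C w \<subseteq> K1" using CK[OF w] KK1 by blast
    have s3: "Nb w - C w \<subseteq> K1" using NbOp[OF w] OpK1 by blast
    have a1: "integrable \<mu> (\<lambda>z. indicator (E w - C w) z :: real)"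
      using Cmu[OF w] fin_sub[OF _ s1] by (intro integrable_real_indicator) auto
    have a2: "integrable \<mu> (\<lambda>z. \<delta> * indicator (C w) z :: real)"
      using Cmu[OF w] fin_sub[OF _ s2] by (intro integrable_mult_right integrable_real_indicator) auto
    have a3: "integrable \<mu> (\<lambda>z. indicator (Nb w - C w) z :: real)"
      using Cmu[OF w] fin_sub[OF _ s3] by (intro integrable_real_indicator) auto
    have "integrable \<mu> (\<lambda>z. indicator (E w - C w) z + \<delta> * indicator (C w) z :: real)"
      by (rule Bochner_Integration.integrable_add[OF a1 a2])
    from Bochner_Integration.integrable_add[OF this a3] show ?thesis unfolding B_def[abs_def] .
  qed
  have i3: "integrable \<mu> f3" unfolding f3_def[abs_def]
    by (rule Bochner_Integration.integrable_sum, rule integrable_mult_right, rule iB) auto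
  have intB: "(\<integral>z. B w z \<partial>\<mu>) \<le> 2 * e1 + \<delta> * mK" if w: "w \<in> Rg" for w
  proof -
    have s1: "E w - C w \<subseteq> K1" using EK KK1 by blast
    have s2: "C w \<subseteq> K1" using CK[OF w] KK1 by blast
    have s3: "Nb w - C w \<subseteq> K1" using NbOp[OF w] OpK1 by blast
    have f1': "emeasure \<mu> (E w - C w) < \<infinity>" using Cmu[OF w] fin_sub[OF _ s1] by auto
    have f2': "emeasure \<mu> (C w) < \<infinity>" using Cmu[OF w] fin_sub[OF _ s2] by auto
    have f3': "emeasure \<mu> (Nb w - C w) < \<infinity>" using Cmu[OF w] fin_sub[OF _ s3] by auto
    have "(\<integral>z. B w z \<partial>\<mu>) = measure \<mu> (E w - C w) + \<delta> * measure \<mu> (C w) + measure \<mu> (Nb w - C w)"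
    proof -
      have "(\<integral>z. B w z \<partial>\<mu>) = (\<integral>z. indicator (E w - C w) z + \<delta> * indicator (C w) z \<partial>\<mu>) + (\<integral>z. indicator (Nb w - C w) z \<partial>\<mu>)"
        unfolding B_def using Cmu[OF w] f1' f2' f3'
        by (intro Bochner_Integration.integral_add) (auto intro!: Bochner_Integration.integrable_add integrable_mult_right integrable_real_indicator)
      also have "(\<integral>z. indicator (E w - C w) z + \<delta> * indicator (C w) z \<partial>\<mu>) = (\<integral>z. indicator (E w - C w) z \<partial>\<mu>) + (\<integral>z. \<delta> * indicator (C w) z \<partial>\<mu>)"
        using Cmu[OF w] f1' f2'
        by (intro Bochner_Integration.integral_add) (auto intro!: integrable_mult_right integrable_real_indicator)
      finally show ?thesis using spU by simp
    qed
    also have "measure \<mu> (E w - C w) = measure \<mu> (E w) - measure \<mu> (C w)"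
    proof (rule measure_Diff)
      have "E w \<subseteq> K1" using EK KK1 by blast
      then show "emeasure \<mu> (E w) \<noteq> \<infinity>" using fin_sub[OF Cmu(2)[OF w]] by simp
    qed (use Cmu[OF w] C w in auto)
    also have "measure \<mu> (Nb w - C w) = measure \<mu> (Nb w) - measure \<mu> (C w)"
    proof (rule measure_Diff)
      have "Nb w \<subseteq> K1" using NbOp[OF w] OpK1 by blast
      then show "emeasure \<mu> (Nb w) \<noteq> \<infinity>" using fin_sub[OF Cmu(3)[OF w]] by simp
    qed (use Cmu[OF w] CNb in auto)
    also have "measure \<mu> (Nb w) \<le> measure \<mu> (C w) + e1"
    proof -
      have "(\<Union>c\<in>C w. ball c (r0 w)) \<subseteq> Op" using r0 w by blast
      then have "measure \<mu> (Nb w) \<le> measure \<mu> (\<Union>c\<in>C w. ball c (r0 w))"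
        using Nbsub[OF w] Cmu[OF w] OpK1 K1fm sb
        by (intro measure_mono_fmeasurable[OF Nbsub[OF w]]) (auto intro!: fmeasurableI2[OF K1fm] borel_open open_UN)
      then show ?thesis using r0 w by fastforce
    qed
    moreover have "measure \<mu> (E w) \<le> measure \<mu> (C w) + e1" using C w by blast
    moreover have "measure \<mu> (C w) \<le> mK" unfolding mK_def
      using CK[OF w] Cmu[OF w] Kfm by (intro measure_mono_fmeasurable) auto
    moreover have "\<delta> * measure \<mu> (C w) \<le> \<delta> * mK" using \<open>measure \<mu> (C w) \<le> mK\<close> \<delta> by (simp add: mult_left_mono)
    ultimately show ?thesis by linarith
  qed
  have pw: "AE z in \<mu>. f2 z - f3 z \<le> f1 z"
    using ae
  proof (rule AE_mp, intro AE_I2 impI)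
    fix z assume nz: "norm (\<xi> z) = 1"
    have e1': "f1 z = (\<Sum>w\<in>Rg. \<psi> w z * (w \<bullet> \<xi> z))"
      unfolding f1_def \<omega>_def by (simp add: inner_sum_left)
    have e2': "f2 z = (\<Sum>w\<in>Rg. indicator (E w) z * (w \<bullet> \<xi> z))"
    proof (cases "z \<in> K")
      case True
      have "G z \<in> Rg" unfolding Rg_def by simp
      have "(\<Sum>w\<in>Rg. indicator (E w) z * (w \<bullet> \<xi> z)) = (\<Sum>w\<in>Rg. if w = G z then G z \<bullet> \<xi> z else 0)"
        using True by (intro sum.cong) (auto simp: E_def indicator_def)
      also have "\<dots> = G z \<bullet> \<xi> z" using finRg \<open>G z \<in> Rg\<close> by simp
      finally show ?thesis using True by (simp add: f2_def)
    next
      case False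
      then show ?thesis by (simp add: f2_def E_def indicator_def)
    qed
    have bnd: "\<forall>w\<in>Rg. \<bar>\<psi> w z - indicator (E w) z\<bar> \<le> B w z"
    proof
      fix w assume w: "w \<in> Rg"
      have p01: "0 \<le> \<psi> w z" "\<psi> w z \<le> 1" using ps w by blast+
      have CE: "C w \<subseteq> E w" using C w by blast
      show "\<bar>\<psi> w z - indicator (E w) z\<bar> \<le> B w z"
      proof (cases "z \<in> C w")
        case True
        have "1 - \<delta> \<le> \<psi> w z" using ps w True by blast
        then show ?thesis using True CE p01 by (auto simp: B_def indicator_def)
      next
        case nC: False
        show ?thesis
        proof (cases "z \<in> E w")
          case True then show ?thesis using nC p01 CE by (auto simp: B_def indicator_def)
        next
          case nE: False
          show ?thesis
          proof (cases "z \<in> Nb w")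
            case True then show ?thesis using nC nE p01 by (auto simp: B_def indicator_def)
          next
            case False
            then have "z \<notin> tsupp (\<psi> w)" using ps w unfolding Nb_def by blast
            then have "\<psi> w z = 0" by (rule tsupp_zero)
            then show ?thesis using nC nE False by (auto simp: B_def indicator_def)
          qed
        qed
      qed
    qed
    have pb: "\<forall>w\<in>Rg. \<bar>w \<bullet> \<xi> z\<bar> \<le> 2" using admRg adm_inner_bound nz by auto
    have "(\<Sum>w\<in>Rg. indicator (E w) z * (w \<bullet> \<xi> z)) - (\<Sum>w\<in>Rg. 2 * B w z) \<le> (\<Sum>w\<in>Rg. \<psi> w z * (w \<bullet> \<xi> z))"
      by (rule pw_bound[OF pb bnd])
    then show "f2 z - f3 z \<le> f1 z" using e1' e2' by (simp add: f3_def)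
  qed
  have "(\<integral>z. f2 z - f3 z \<partial>\<mu>) \<le> (\<integral>z. f1 z \<partial>\<mu>)"
    by (rule integral_mono_AE[OF Bochner_Integration.integrable_diff[OF i2 i3] i1 pw])
  then have I1: "(\<integral>z. f2 z \<partial>\<mu>) - (\<integral>z. f3 z \<partial>\<mu>) \<le> (\<integral>z. f1 z \<partial>\<mu>)"
    using i2 i3 by simp
  have "(\<integral>z. f3 z \<partial>\<mu>) = (\<Sum>w\<in>Rg. 2 * (\<integral>z. B w z \<partial>\<mu>))"
    unfolding f3_def using iB by (simp add: integral_sum integrable_mult_right)
  also have "\<dots> \<le> (\<Sum>w\<in>Rg. 2 * (2 * e1 + \<delta> * mK))"
  proof (rule sum_mono)
    fix w assume "w \<in> Rg"
    then have "(\<integral>z. B w z \<partial>\<mu>) \<le> 2 * e1 + \<delta> * mK" by (rule intB)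
    then show "2 * (\<integral>z. B w z \<partial>\<mu>) \<le> 2 * (2 * e1 + \<delta> * mK)" by (rule mult_left_mono) simp
  qed
  also have "\<dots> = real n * (4 * e1 + 2 * \<delta> * mK)" by (simp add: n_def algebra_simps)
  also have "\<dots> \<le> e / 2"
  proof -
    have a: "real n * (4 * e1) = e / 4" using npos by (simp add: e1_def)
    have m1: "mK + 1 \<noteq> 0" using mK0 by linarith
    have n0: "real n \<noteq> 0" using npos by simp
    have dnz: "8 * real n * (mK + 1) \<noteq> 0" using m1 n0 by simp
    have dd: "\<delta> * (8 * real n * (mK + 1)) = e" unfolding \<delta>_def using dnz by simp
    have nd: "real n * \<delta> \<ge> 0" using \<delta> by simp
    have X: "real n * \<delta> * mK \<le> real n * \<delta> * (mK + 1)" using nd by (intro mult_left_mono) auto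
    have Y: "8 * (real n * \<delta> * (mK + 1)) = e" using dd by (simp add: algebra_simps)
    have Z: "real n * (2 * \<delta> * mK) = 2 * (real n * \<delta> * mK)" by (simp add: algebra_simps)
    have W: "real n * (4 * e1 + 2 * \<delta> * mK) = real n * (4 * e1) + real n * (2 * \<delta> * mK)"
      by (simp add: algebra_simps)
    show ?thesis using a X Y Z W by linarith
  qed
  finally have I3: "(\<integral>z. f3 z \<partial>\<mu>) \<le> e / 2" .
  have Tom: "T \<omega> = (\<integral>z. f1 z \<partial>\<mu>)" using Trep omT unfolding f1_def by blast
  have main: "(\<integral> z. indicator K z * Phi (\<xi> z) \<partial>\<mu>) \<le> T \<omega> + e"
    using G(3) I1 I3 Tom unfolding f2_def by linarith
  have iP: "integrable \<mu> (\<lambda>z. indicator K z * Phi (\<xi> z))"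
  proof (rule Bochner_Integration.integrable_bound[where f="\<lambda>z. 2 * indicator K z :: real"])
    show "integrable \<mu> (\<lambda>z. 2 * indicator K z :: real)"
      using Kmu Kf by (intro integrable_mult_right integrable_real_indicator) auto
    have "(\<lambda>z. Phi (\<xi> z)) \<in> borel_measurable \<mu>" using measurable_compose[OF xmu Phi_meas] by (simp add: o_def)
    then show "(\<lambda>z. indicator K z * Phi (\<xi> z)) \<in> borel_measurable \<mu>" by measurable
    show "AE z in \<mu>. norm (indicator K z * Phi (\<xi> z)) \<le> norm (2 * indicator K z :: real)"
      using ae
    proof (rule AE_mp, intro AE_I2 impI)
      fix z assume nz: "norm (\<xi> z) = 1"
      have "Phi (\<xi> z) \<le> 2" using Phi_bound nz by simp
      then show "norm (indicator K z * Phi (\<xi> z)) \<le> norm (2 * indicator K z :: real)"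
        using Phi_nonneg[of "\<xi> z"] by (simp add: indicator_def)
    qed
  qed
  have "(\<integral>\<^sup>+ z. indicator K z * ennreal (Phi (\<xi> z)) \<partial>\<mu>) = (\<integral>\<^sup>+ z. ennreal (indicator K z * Phi (\<xi> z)) \<partial>\<mu>)"
    by (intro nn_integral_cong) (simp add: indicator_def)
  also have "\<dots> = ennreal (\<integral> z. indicator K z * Phi (\<xi> z) \<partial>\<mu>)"
    by (rule nn_integral_eq_integral[OF iP]) (simp add: Phi_nonneg)
  also have "\<dots> \<le> ennreal (T \<omega> + e)" using main by (rule ennreal_leI)
  also have "\<dots> \<le> ennreal (T \<omega>) + ennreal e"
  proof (cases "T \<omega> \<ge> 0")
    case True then show ?thesis using e by (simp add: ennreal_plus)
  next
    case False
    then have "ennreal (T \<omega> + e) \<le> ennreal e" by (intro ennreal_leI) simp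
    then show ?thesis by (meson add_increasing order_trans zero_le)
  qed
  finally show ?thesis by (rule that[OF omT tsV omadm])
qed

theorem proposition4p5:
  fixes \<Omega> :: "complex set" and \<epsilon> :: "nat \<Rightarrow> real" and N :: "nat \<Rightarrow> nat"
    and u :: "nat \<Rightarrow> int \<times> int \<Rightarrow> complex" and T :: current2 and C :: real
  assumes "open \<Omega>" and "bounded \<Omega>" and "lipschitz_boundary \<Omega>"
    and "\<forall>n. \<epsilon> n > 0" and "\<epsilon> \<longlonglongrightarrow> 0" and "\<forall>n. N n > 0"
    and "(\<lambda>n. theta (N n) / (\<epsilon> n * \<bar>ln (\<epsilon> n)\<bar>)) \<longlonglongrightarrow> 0"
    and "\<forall>n i. u n i \<in> clock_set (N n)"
    and "\<forall>n. energy \<Omega> (\<epsilon> n) (u n) / (\<epsilon> n * theta (N n)) \<le> C"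
    and "\<forall>\<omega>\<in>test_forms (\<Omega> \<times> UNIV). (\<lambda>n. G_cur \<Omega> (\<epsilon> n) (u n) \<omega>) \<longlonglongrightarrow> T \<omega>"
    and "cart \<Omega> T"
  shows "\<forall>A. open A \<and> compact (closure A) \<and> closure A \<subseteq> \<Omega> \<longrightarrow>
          (\<forall>\<mu> \<xi> \<mu>s \<xi>s. polar_rep (\<Omega> \<times> UNIV) T \<mu> \<xi> \<and>
             (\<forall>n. polar_rep (\<Omega> \<times> UNIV) (G_cur \<Omega> (\<epsilon> n) (u n)) (\<mu>s n) (\<xi>s n)) \<longrightarrow>
             (\<integral>\<^sup>+ z. indicator (A \<times> UNIV) z * ennreal (Phi (\<xi> z)) \<partial>\<mu>)
               \<le> liminf (\<lambda>n. \<integral>\<^sup>+ z. indicator (A \<times> UNIV) z * ennreal (Phi (\<xi>s n z)) \<partial>(\<mu>s n)))"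
proof (intro allI impI, elim conjE)
  fix A :: "complex set" and \<mu> \<xi> \<mu>s \<xi>s
  assume oA: "open A" and cA: "compact (closure A)" and sA: "closure A \<subseteq> \<Omega>"
    and pT: "polar_rep (\<Omega> \<times> UNIV) T \<mu> \<xi>"
    and pG: "\<forall>n. polar_rep (\<Omega> \<times> UNIV) (G_cur \<Omega> (\<epsilon> n) (u n)) (\<mu>s n) (\<xi>s n)"
  define W :: "pt set" where "W = \<Omega> \<times> UNIV"
  define V :: "pt set" where "V = A \<times> UNIV"
  have oV: "open V" unfolding V_def using oA by (intro open_Times) auto
  have "A \<subseteq> \<Omega>" using sA closure_subset[of A] by (rule order_trans[rotated])
  then have VW: "V \<subseteq> W" unfolding V_def W_def by auto
  define L where "L = liminf (\<lambda>n. \<integral>\<^sup>+ z. indicator V z * ennreal (Phi (\<xi>s n z)) \<partial>(\<mu>s n))"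
  obtain K where K: "\<And>m. compact (K m)" "\<And>m. K m \<subseteq> V" "incseq K" "(\<Union>m. K m) = V"
    using exhaust[OF oV] by blast
  have sb: "sets \<mu> = sets borel" using pT unfolding polar_rep_def by blast
  have meas: "\<xi> \<in> borel_measurable \<mu>"
    using pT measurable_cong_sets[OF sb refl] unfolding polar_rep_def by blast
  have Km: "(\<integral>\<^sup>+ z. indicator (K m) z * ennreal (Phi (\<xi> z)) \<partial>\<mu>) \<le> L" for m
  proof (rule ennreal_le_epsilon)
    fix e :: real assume e: "0 < e"
    obtain \<omega> where om: "\<omega> \<in> test_forms W" "tsupp \<omega> \<subseteq> V" "\<forall>z. adm (\<omega> z)"
      "(\<integral>\<^sup>+ z. indicator (K m) z * ennreal (Phi (\<xi> z)) \<partial>\<mu>) \<le> ennreal (T \<omega>) + ennreal e"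
      using approx[OF pT[folded W_def] oV VW K(1) K(2) e] by blast
    have "ennreal (T \<omega>) \<le> L" unfolding L_def
    proof (rule liminf_step)
      show "(\<lambda>n. G_cur \<Omega> (\<epsilon> n) (u n) \<omega>) \<longlonglongrightarrow> T \<omega>" using assms(10) om(1) W_def by blast
      show "ennreal (G_cur \<Omega> (\<epsilon> n) (u n) \<omega>) \<le> (\<integral>\<^sup>+ z. indicator V z * ennreal (Phi (\<xi>s n z)) \<partial>(\<mu>s n))" for n
        by (rule ub[OF pG[rule_format, of n, folded W_def] om(1) om(2) om(3)])
    qed
    then show "(\<integral>\<^sup>+ z. indicator (K m) z * ennreal (Phi (\<xi> z)) \<partial>\<mu>) \<le> L + ennreal e"
      using om(4) by (meson add_right_mono order_trans)
  qed
  have sup: "(\<integral>\<^sup>+ z. indicator V z * ennreal (Phi (\<xi> z)) \<partial>\<mu>) = (SUP m. \<integral>\<^sup>+ z. indicator (K m) z * ennreal (Phi (\<xi> z)) \<partial>\<mu>)"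
  proof -
    have pw: "indicator V z * ennreal (Phi (\<xi> z)) = (SUP m. indicator (K m) z * ennreal (Phi (\<xi> z)))" for z
    proof (cases "z \<in> V")
      case True
      then obtain m0 where "z \<in> K m0" using K(4) by blast
      then have "indicator (K m0) z * ennreal (Phi (\<xi> z)) = ennreal (Phi (\<xi> z))" by simp
      moreover have "indicator (K m) z * ennreal (Phi (\<xi> z)) \<le> ennreal (Phi (\<xi> z))" for m
        by (simp add: indicator_def)
      ultimately have "(SUP m. indicator (K m) z * ennreal (Phi (\<xi> z))) = ennreal (Phi (\<xi> z))"
        by (intro antisym SUP_least) (auto intro: SUP_upper2[of m0])
      then show ?thesis using True by simp
    next
      case False
      then have "z \<notin> K m" for m using K(2) by blast
      then show ?thesis using False by simp
    qed
    have "incseq (\<lambda>m z. indicator (K m) z * ennreal (Phi (\<xi> z)))"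
    proof (rule incseq_SucI, rule le_funI)
      fix m z
      show "indicator (K m) z * ennreal (Phi (\<xi> z)) \<le> indicator (K (Suc m)) z * ennreal (Phi (\<xi> z))"
        using K(3) by (auto simp: indicator_def incseq_Suc_iff)
    qed
    moreover have "(\<lambda>z. indicator (K m) z * ennreal (Phi (\<xi> z))) \<in> borel_measurable \<mu>" for m
    proof -
      have "closed (K m)" using K(1) by (rule compact_imp_closed)
      then have "K m \<in> sets \<mu>" unfolding sb by (rule borel_closed)
      moreover have "(\<lambda>z. Phi (\<xi> z)) \<in> borel_measurable \<mu>" using measurable_compose[OF meas Phi_meas] by (simp add: o_def)
      ultimately show ?thesis by measurable
    qed
    ultimately have "(\<integral>\<^sup>+ z. (SUP m. indicator (K m) z * ennreal (Phi (\<xi> z))) \<partial>\<mu>) = (SUP m. \<integral>\<^sup>+ z. indicator (K m) z * ennreal (Phi (\<xi> z)) \<partial>\<mu>)"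
      by (rule nn_integral_monotone_convergence_SUP)
    then show ?thesis by (simp add: pw)
  qed
  show "(\<integral>\<^sup>+ z. indicator (A \<times> UNIV) z * ennreal (Phi (\<xi> z)) \<partial>\<mu>)
               \<le> liminf (\<lambda>n. \<integral>\<^sup>+ z. indicator (A \<times> UNIV) z * ennreal (Phi (\<xi>s n z)) \<partial>(\<mu>s n))"
    using sup Km unfolding L_def V_def[symmetric] by (simp add: SUP_least)
qed

end
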